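(* Let $h=0$, $\rho>0$ and $\varepsilon\in(-\frac{J\rho}2,0]$. Let $I\subset\Lambda$ be an index set of fixed size and $f:\mathbb{R}^{|I|}\to\mathbb{R}$ a bounded $1$-Lipschitz function with respect to $\|\cdot\|_2$. If $\varepsilon\in(-\frac{J\rho}2,0)$ and $\beta=\frac{1/J}{\rho+2\varepsilon/J}$, then \[ \langle f\circ P_I\rangle_{\mathrm{MC}}^{\varepsilon,\rho;N}=\langle f\circ P_I\rangle_{\mathrm{C}}^{\beta,\rho;N}+O(N^{-1/2}). \] If $\varepsilon=0$, then for every $\beta<\frac1{\rho J}$, \[ \langle f\circ P_I\rangle_{\mathrm{MC}}^{0,\rho;N}=\langle f\circ P_I\rangle_{\mathrm{C}}^{\beta,\rho;N}+O(N^{-1/2}). \]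
   Context: Mean-field spherical model with $h=0$: $\phi\in\mathbb{R}^N$ ($N=|\Lambda|$ sites), $J>0$, $H[\phi]=-\frac J{2N}(\sum_x\phi_x)^2$; $P_I$ restricts to sites in $I$. For $|m|<\sqrt\rho$, $\mu_{\mathrm{MC}}^{m,\rho;N}$ is the normalized uniform surface measure on $\{\sum\phi_x=mN,\ \sum\phi_x^2=\rho N\}$. For $\varepsilon\in(-\frac{\rho J}2,0)$, $\mu_{\mathrm{MC}}^{\varepsilon,\rho;N}=\frac12\mu_{\mathrm{MC}}^{\sqrt{-2\varepsilon/J},\rho;N}+\frac12\mu_{\mathrm{MC}}^{-\sqrt{-2\varepsilon/J},\rho;N}$, and $\mu_{\mathrm{MC}}^{0,\rho;N}$ is the $m=0$ ensemble. With $Z_{\mathrm{MC}}(\varepsilon,\rho;N)=(\rho+\frac{2\varepsilon}J)^{(N-3)/2}/\sqrt{-2\varepsilon/J}$, the canonical ensemble is $\langle f\rangle_{\mathrm{C}}^{\beta,\rho;N}=\frac{\int_{-\rho J/2}^0d\varepsilon'\,e^{-\beta\varepsilon'N}Z_{\mathrm{MC}}(\varepsilon',\rho;N)\langle f\rangle_{\mathrm{MC}}^{\varepsilon',\rho;N}}{\int_{-\rho J/2}^0d\varepsilon'\,e^{-\beta\varepsilon'N}Z_{\mathrm{MC}}(\varepsilon',\rho;N)}$, $\beta\in\mathbb{R}$. *)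

theory Defs
  imports "HOL-Analysis.Analysis" "HOL-Library.Landau_Symbols"
begin

text \<open>Lattice Lambda = {..<N}; configurations phi are extensional functions nat => real on {..<N}.\<close>

definition Leb_N :: "nat \<Rightarrow> (nat \<Rightarrow> real) measure" where
  "Leb_N N = PiM {..<N} (\<lambda>_. lborel)"

definition unit_ball_N :: "nat \<Rightarrow> (nat \<Rightarrow> real) set" where
  "unit_ball_N N = {x \<in> space (Leb_N N). (\<Sum>i<N. (x i)\<^sup>2) \<le> 1}"

definition proj0 :: "nat \<Rightarrow> (nat \<Rightarrow> real) \<Rightarrow> (nat \<Rightarrow> real)" where
  "proj0 N x = (\<lambda>i. x i - (\<Sum>j<N. x j) / real N)"

definition norm_N :: "nat \<Rightarrow> (nat \<Rightarrow> real) \<Rightarrow> real" where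
  "norm_N N x = sqrt (\<Sum>i<N. (x i)\<^sup>2)"

text \<open>Map from the unit ball onto the sphere {sum phi = m N, sum phi^2 = rho N}
  (radial projection of the hyperplane component).\<close>
definition to_sphere :: "real \<Rightarrow> real \<Rightarrow> nat \<Rightarrow> (nat \<Rightarrow> real) \<Rightarrow> (nat \<Rightarrow> real)" where
  "to_sphere m \<rho> N x = restrict (\<lambda>i. m + sqrt ((\<rho> - m\<^sup>2) * real N) * proj0 N x i / norm_N N (proj0 N x)) {..<N}"

text \<open>Normalized uniform surface measure on {sum phi = m N, sum phi^2 = rho N}:
  push-forward of the uniform distribution on the unit ball under the radial projection
  of the hyperplane component (the O(N-1)-invariant probability measure on that sphere).\<close>
definition mu_MC_m :: "real \<Rightarrow> real \<Rightarrow> nat \<Rightarrow> (nat \<Rightarrow> real) measure" where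
  "mu_MC_m m \<rho> N = distr (uniform_measure (Leb_N N) (unit_ball_N N))
                          (PiM {..<N} (\<lambda>_. borel)) (to_sphere m \<rho> N)"

definition MC_m_expect :: "real \<Rightarrow> real \<Rightarrow> nat \<Rightarrow> ((nat \<Rightarrow> real) \<Rightarrow> real) \<Rightarrow> real" where
  "MC_m_expect m \<rho> N g = (\<integral>\<phi>. g \<phi> \<partial>mu_MC_m m \<rho> N)"

definition MC_expect :: "real \<Rightarrow> real \<Rightarrow> real \<Rightarrow> nat \<Rightarrow> ((nat \<Rightarrow> real) \<Rightarrow> real) \<Rightarrow> real" where
  "MC_expect J \<epsilon> \<rho> N g =
     (if \<epsilon> = 0 then MC_m_expect 0 \<rho> N g
      else (1/2) * MC_m_expect (sqrt (-2*\<epsilon>/J)) \<rho> N g + (1/2) * MC_m_expect (- sqrt (-2*\<epsilon>/J)) \<rho> N g)"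

definition Z_MC :: "real \<Rightarrow> real \<Rightarrow> real \<Rightarrow> nat \<Rightarrow> real" where
  "Z_MC J \<epsilon> \<rho> N = (\<rho> + 2*\<epsilon>/J) powr ((real N - 3) / 2) / sqrt (-2*\<epsilon>/J)"

definition C_expect :: "real \<Rightarrow> real \<Rightarrow> real \<Rightarrow> nat \<Rightarrow> ((nat \<Rightarrow> real) \<Rightarrow> real) \<Rightarrow> real" where
  "C_expect J \<beta> \<rho> N g =
     (LBINT \<epsilon>'=-\<rho>*J/2..0. exp (-\<beta>*\<epsilon>'*real N) * Z_MC J \<epsilon>' \<rho> N * MC_expect J \<epsilon>' \<rho> N g)
     / (LBINT \<epsilon>'=-\<rho>*J/2..0. exp (-\<beta>*\<epsilon>'*real N) * Z_MC J \<epsilon>' \<rho> N)"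

definition P_I :: "nat set \<Rightarrow> (nat \<Rightarrow> real) \<Rightarrow> (nat \<Rightarrow> real)" where
  "P_I I \<phi> = (\<lambda>i. if i \<in> I then \<phi> i else 0)"

end

theory Submission
  imports Defs "HOL-Probability.Probability_Measure"
begin

interpretation pl: product_sigma_finite "\<lambda>_. lborel" by standard

definition uu :: "nat \<Rightarrow> (nat\<Rightarrow>real) \<Rightarrow> nat \<Rightarrow> real" where
  "uu N x k = proj0 N x k / norm_N N (proj0 N x)"

lemma sum_uu_sq: "(\<Sum>k<N. (uu N x k)\<^sup>2) \<le> 1"
proof -
  define p where "p = proj0 N x"
  have nn: "norm_N N p = sqrt (\<Sum>k<N. (p k)\<^sup>2)" by (simp add: norm_N_def)
  show ?thesis
  proof (cases "(\<Sum>k<N. (p k)\<^sup>2) = 0")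
    case True
    then show ?thesis by (simp add: uu_def p_def[symmetric] nn power_divide)
  next
    case False
    have pos: "(\<Sum>k<N. (p k)\<^sup>2) > 0" using False by (metis less_eq_real_def sum_nonneg zero_le_power2)
    have sq: "(sqrt (\<Sum>k<N. (p k)\<^sup>2))\<^sup>2 = (\<Sum>k<N. (p k)\<^sup>2)"
      using pos by simp
    have "(\<Sum>k<N. (uu N x k)\<^sup>2) = (\<Sum>k<N. (p k)\<^sup>2 / (\<Sum>k<N. (p k)\<^sup>2))"
      by (simp add: uu_def p_def[symmetric] nn power_divide sq)
    also have "\<dots> = 1" using pos by (simp add: sum_divide_distrib[symmetric])
    finally show ?thesis by simp
  qed
qed

lemma uu_bound: assumes "k < N" shows "\<bar>uu N x k\<bar> \<le> 1"
proof -
  have "(uu N x k)\<^sup>2 \<le> (\<Sum>k<N. (uu N x k)\<^sup>2)"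
    using assms by (intro member_le_sum) auto
  also have "\<dots> \<le> 1" by (rule sum_uu_sq)
  finally show ?thesis by (simp add: abs_square_le_1)
qed

lemma comp_meas: "i < N \<Longrightarrow> (\<lambda>x. x i) \<in> borel_measurable (Pi\<^sub>M {..<N} (\<lambda>_. lborel))"
  using measurable_component_singleton[of i "{..<N}" "\<lambda>_. lborel"] by simp

lemma sumx_meas[measurable]: "(\<lambda>x. sum x {..<N}) \<in> borel_measurable (Pi\<^sub>M {..<N} (\<lambda>_. lborel))"
  using borel_measurable_sum[of "{..<N}" "\<lambda>i x. x i" "Pi\<^sub>M {..<N} (\<lambda>_. lborel)"] comp_meas by auto

lemma proj0_meas[measurable]: "i < N \<Longrightarrow> (\<lambda>x. proj0 N x i) \<in> borel_measurable (Pi\<^sub>M {..<N} (\<lambda>_. lborel))"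
  unfolding proj0_def using comp_meas[of i N] sumx_meas[of N] by measurable

lemma normN_meas[measurable]: "(\<lambda>x. norm_N N (proj0 N x)) \<in> borel_measurable (Pi\<^sub>M {..<N} (\<lambda>_. lborel))"
proof -
  have "(\<lambda>x. \<Sum>i<N. (proj0 N x i)\<^sup>2) \<in> borel_measurable (Pi\<^sub>M {..<N} (\<lambda>_. lborel))"
    using borel_measurable_sum[of "{..<N}" "\<lambda>i x. (proj0 N x i)\<^sup>2" "Pi\<^sub>M {..<N} (\<lambda>_. lborel)"] proj0_meas by auto
  then show ?thesis unfolding norm_N_def by measurable
qed

lemma uu_meas[measurable]: assumes "k < N" shows "(\<lambda>x. uu N x k) \<in> borel_measurable (Leb_N N)"
proof -
  have [simp]: "k \<in> {..<N}" using assms by simp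
  show ?thesis unfolding uu_def Leb_N_def
    using proj0_meas[OF assms] normN_meas[of N] by measurable
qed

lemma space_Leb: "space (Leb_N N) = PiE {..<N} (\<lambda>_. UNIV)"
  by (simp add: Leb_N_def space_PiM)

lemma sumsq_meas[measurable]: "(\<lambda>x. \<Sum>i<N. (x i)\<^sup>2) \<in> borel_measurable (Leb_N N)"
  unfolding Leb_N_def
  using borel_measurable_sum[of "{..<N}" "\<lambda>i x. (x i)\<^sup>2" "Pi\<^sub>M {..<N} (\<lambda>_. lborel)"] comp_meas by auto

lemma ball_sets[measurable]: "unit_ball_N N \<in> sets (Leb_N N)"
  unfolding unit_ball_N_def by measurable

lemma ball_fin: "emeasure (Leb_N N) (unit_ball_N N) \<noteq> \<infinity>"
proof -
  have sub: "unit_ball_N N \<subseteq> PiE {..<N} (\<lambda>_. {-1..1::real})"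
  proof
    fix x assume x: "x \<in> unit_ball_N N"
    then have xs: "x \<in> PiE {..<N} (\<lambda>_. UNIV)" and s: "(\<Sum>i<N. (x i)\<^sup>2) \<le> 1"
      by (auto simp: unit_ball_N_def space_Leb)
    have "\<bar>x i\<bar> \<le> 1" if "i < N" for i
    proof -
      have "(x i)\<^sup>2 \<le> (\<Sum>i<N. (x i)\<^sup>2)" using that by (intro member_le_sum) auto
      then show ?thesis using s by (simp add: abs_square_le_1[symmetric])
    qed
    then show "x \<in> PiE {..<N} (\<lambda>_. {-1..1::real})" using xs by (auto simp: PiE_def Pi_def abs_le_iff)
  qed
  have "emeasure (Leb_N N) (unit_ball_N N) \<le> emeasure (Leb_N N) (PiE {..<N} (\<lambda>_. {-1..1::real}))"
    by (rule emeasure_mono[OF sub]) (simp add: Leb_N_def)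
  also have "\<dots> = (\<Prod>i<N. emeasure lborel {-1..1::real})"
    unfolding Leb_N_def by (rule pl.emeasure_PiM) auto
  also have "\<dots> < \<infinity>" by (simp add: power_eq_top_ennreal less_top[symmetric])
  finally show ?thesis by simp
qed

lemma ball_pos: assumes "N \<ge> 1" shows "emeasure (Leb_N N) (unit_ball_N N) \<noteq> 0"
proof -
  let ?c = "1 / real N"
  have sub: "PiE {..<N} (\<lambda>_. {-?c..?c}) \<subseteq> unit_ball_N N"
  proof
    fix x assume x: "x \<in> PiE {..<N} (\<lambda>_. {-?c..?c})"
    have "(\<Sum>i<N. (x i)\<^sup>2) \<le> (\<Sum>i<N. ?c\<^sup>2)"
    proof (intro sum_mono)
      fix i assume "i \<in> {..<N}"
      then have "\<bar>x i\<bar> \<le> ?c" using x by (auto simp: PiE_def Pi_def abs_le_iff)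
      then show "(x i)\<^sup>2 \<le> ?c\<^sup>2" by (metis abs_ge_zero abs_of_nonneg order_trans power2_abs power_mono)
    qed
    also have "\<dots> = 1 / real N" using assms by (simp add: power2_eq_square)
    also have "\<dots> \<le> 1" using assms by simp
    finally show "x \<in> unit_ball_N N" using x by (auto simp: unit_ball_N_def space_Leb PiE_def)
  qed
  have "0 < (\<Prod>i<N. emeasure lborel {-?c..?c})"
  proof -
    have "ennreal (2/real N) ^ N = ennreal ((2/real N)^N)" by (rule ennreal_power) simp
    then show ?thesis using assms by simp
  qed
  also have "(\<Prod>i<N. emeasure lborel {-?c..?c}) = emeasure (Leb_N N) (PiE {..<N} (\<lambda>_. {-?c..?c}))"
    unfolding Leb_N_def by (rule pl.emeasure_PiM[symmetric]) auto
  also have "\<dots> \<le> emeasure (Leb_N N) (unit_ball_N N)"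
    by (rule emeasure_mono[OF sub]) simp
  finally show ?thesis by simp
qed

definition PP :: "nat \<Rightarrow> (nat \<Rightarrow> real) measure" where
  "PP N = uniform_measure (Leb_N N) (unit_ball_N N)"

lemma PP_prob: "N \<ge> 1 \<Longrightarrow> prob_space (PP N)"
  unfolding PP_def by (rule prob_space_uniform_measure[OF ball_pos ball_fin])

definition sw :: "nat \<Rightarrow> nat \<Rightarrow> nat \<Rightarrow> nat" where
  "sw i j k = (if k = i then j else if k = j then i else k)"

definition TT :: "nat \<Rightarrow> nat \<Rightarrow> nat \<Rightarrow> (nat \<Rightarrow> real) \<Rightarrow> (nat \<Rightarrow> real)" where
  "TT N i j x = restrict (\<lambda>k. x (sw i j k)) {..<N}"

lemma sw_sw[simp]: "sw i j (sw i j k) = k" by (simp add: sw_def)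

lemma sw_lt: "i < N \<Longrightarrow> j < N \<Longrightarrow> k < N \<Longrightarrow> sw i j k < N" by (simp add: sw_def)

lemma sw_bij: assumes "i < N" "j < N" shows "bij_betw (sw i j) {..<N} {..<N}"
  by (rule bij_betw_byWitness[where f'="sw i j"]) (use assms sw_lt in auto)

lemma TT_meas: assumes "i < N" "j < N" shows "TT N i j \<in> measurable (Leb_N N) (Leb_N N)"
  unfolding TT_def Leb_N_def
proof (rule measurable_restrict)
  fix k assume "k \<in> {..<N}"
  then have "sw i j k \<in> {..<N}" using sw_lt assms by auto
  then show "(\<lambda>x. x (sw i j k)) \<in> measurable (Pi\<^sub>M {..<N} (\<lambda>_. lborel)) lborel"
    by (rule measurable_component_singleton)
qed

lemma TT_distr: assumes "i < N" "j < N" shows "distr (Leb_N N) (Leb_N N) (TT N i j) = Leb_N N"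
  unfolding Leb_N_def
proof (rule pl.PiM_eqI)
  show "finite {..<N}" by simp
  show "sets (distr (Pi\<^sub>M {..<N} (\<lambda>_. lborel)) (Pi\<^sub>M {..<N} (\<lambda>_. lborel)) (TT N i j)) = sets (Pi\<^sub>M {..<N} (\<lambda>_. lborel))"
    by simp
  fix A :: "nat \<Rightarrow> real set" assume A: "\<And>k. k \<in> {..<N} \<Longrightarrow> A k \<in> sets lborel"
  have meas: "TT N i j \<in> measurable (Pi\<^sub>M {..<N} (\<lambda>_. lborel)) (Pi\<^sub>M {..<N} (\<lambda>_. lborel))"
    using TT_meas[OF assms] by (simp add: Leb_N_def)
  have pre: "TT N i j -` PiE {..<N} A \<inter> space (Pi\<^sub>M {..<N} (\<lambda>_. lborel)) = PiE {..<N} (\<lambda>k. A (sw i j k))"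
  proof (intro set_eqI iffI)
    fix x assume "x \<in> TT N i j -` PiE {..<N} A \<inter> space (Pi\<^sub>M {..<N} (\<lambda>_. lborel))"
    then have x1: "\<forall>k<N. x (sw i j k) \<in> A k" and x2: "x \<in> extensional {..<N}"
      by (auto simp: TT_def space_PiM PiE_def Pi_def)
    have "x k \<in> A (sw i j k)" if "k < N" for k
      using x1[rule_format, of "sw i j k"] sw_lt[OF assms that] by simp
    then show "x \<in> PiE {..<N} (\<lambda>k. A (sw i j k))" using x2 by (auto simp: PiE_def Pi_def)
  next
    fix x assume x: "x \<in> PiE {..<N} (\<lambda>k. A (sw i j k))"
    have "x (sw i j k) \<in> A k" if "k < N" for k
      using x sw_lt[OF assms that] by (auto simp: PiE_def Pi_def dest!: bspec[of _ _ "sw i j k"])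
    then show "x \<in> TT N i j -` PiE {..<N} A \<inter> space (Pi\<^sub>M {..<N} (\<lambda>_. lborel))"
      using x by (auto simp: TT_def space_PiM PiE_def Pi_def)
  qed
  have "emeasure (distr (Pi\<^sub>M {..<N} (\<lambda>_. lborel)) (Pi\<^sub>M {..<N} (\<lambda>_. lborel)) (TT N i j)) (PiE {..<N} A)
      = emeasure (Pi\<^sub>M {..<N} (\<lambda>_. lborel)) (PiE {..<N} (\<lambda>k. A (sw i j k)))"
    using A by (subst emeasure_distr[OF meas]) (auto simp: pre intro!: sets_PiM_I_finite)
  also have "\<dots> = (\<Prod>k<N. emeasure lborel (A (sw i j k)))"
    using A sw_lt[OF assms] by (intro pl.emeasure_PiM) auto
  also have "\<dots> = (\<Prod>k<N. emeasure lborel (A k))"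
    using prod.reindex_bij_betw[OF sw_bij[OF assms], of "\<lambda>k. emeasure lborel (A k)"] by simp
  finally show "emeasure (distr (Pi\<^sub>M {..<N} (\<lambda>_. lborel)) (Pi\<^sub>M {..<N} (\<lambda>_. lborel)) (TT N i j)) (PiE {..<N} A)
      = (\<Prod>k\<in>{..<N}. emeasure lborel (A k))" .
qed

lemma sum_sw: assumes "i < N" "j < N" shows "(\<Sum>k<N. g (sw i j k)) = (\<Sum>k<N. (g k::real))"
  using sum.reindex_bij_betw[OF sw_bij[OF assms], of g] by simp

lemma TT_space: "TT N i j x \<in> space (Leb_N N)"
  by (simp add: TT_def space_Leb)

lemma TT_ball: assumes "i < N" "j < N" "x \<in> space (Leb_N N)"
  shows "TT N i j x \<in> unit_ball_N N \<longleftrightarrow> x \<in> unit_ball_N N"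
proof -
  have "(\<Sum>k<N. (TT N i j x k)\<^sup>2) = (\<Sum>k<N. (x (sw i j k))\<^sup>2)" by (simp add: TT_def)
  also have "\<dots> = (\<Sum>k<N. (x k)\<^sup>2)" using sum_sw[OF assms(1,2), of "\<lambda>k. (x k)\<^sup>2"] by simp
  finally show ?thesis using assms(3) TT_space by (simp add: unit_ball_N_def)
qed

lemma PP_distr: assumes "i < N" "j < N" shows "distr (PP N) (Leb_N N) (TT N i j) = PP N"
proof (rule measure_eqI)
  show "sets (distr (PP N) (Leb_N N) (TT N i j)) = sets (PP N)" by (simp add: PP_def)
  fix A assume "A \<in> sets (distr (PP N) (Leb_N N) (TT N i j))"
  then have A[measurable]: "A \<in> sets (Leb_N N)" by simp
  have m: "TT N i j \<in> measurable (Leb_N N) (Leb_N N)" by (rule TT_meas[OF assms])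
  have m2: "TT N i j \<in> measurable (PP N) (Leb_N N)"
    using m measurable_cong_sets[of "PP N" "Leb_N N" "Leb_N N" "Leb_N N"] by (simp add: PP_def)
  let ?B = "unit_ball_N N"
  have seteq: "?B \<inter> (TT N i j -` A \<inter> space (Leb_N N)) = TT N i j -` (?B \<inter> A) \<inter> space (Leb_N N)"
    using TT_ball[OF assms] by auto
  have pre_sets: "TT N i j -` A \<inter> space (Leb_N N) \<in> sets (Leb_N N)"
    using m A by (rule measurable_sets)
  have "emeasure (distr (PP N) (Leb_N N) (TT N i j)) A = emeasure (PP N) (TT N i j -` A \<inter> space (Leb_N N))"
    using m2 A by (subst emeasure_distr) (auto simp: PP_def)
  also have "\<dots> = emeasure (Leb_N N) (?B \<inter> (TT N i j -` A \<inter> space (Leb_N N))) / emeasure (Leb_N N) ?B"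
    unfolding PP_def using pre_sets by (subst emeasure_uniform_measure) auto
  also have "emeasure (Leb_N N) (?B \<inter> (TT N i j -` A \<inter> space (Leb_N N))) = emeasure (distr (Leb_N N) (Leb_N N) (TT N i j)) (?B \<inter> A)"
    unfolding seteq using m by (subst emeasure_distr) auto
  also have "\<dots> = emeasure (Leb_N N) (?B \<inter> A)" by (simp add: TT_distr[OF assms])
  also have "emeasure (Leb_N N) (?B \<inter> A) / emeasure (Leb_N N) ?B = emeasure (PP N) A"
    unfolding PP_def by (subst emeasure_uniform_measure) auto
  finally show "emeasure (distr (PP N) (Leb_N N) (TT N i j)) A = emeasure (PP N) A" .
qed

lemma PP_swap_integral: assumes "i < N" "j < N" and h: "h \<in> borel_measurable (Leb_N N)"
  shows "(\<integral>x. h (TT N i j x) \<partial>PP N) = (\<integral>x. (h x::real) \<partial>PP N)"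
proof -
  have m2: "TT N i j \<in> measurable (PP N) (Leb_N N)"
    using TT_meas[OF assms(1,2)] measurable_cong_sets[of "PP N" "Leb_N N" "Leb_N N" "Leb_N N"] by (simp add: PP_def)
  have "(\<integral>x. h (TT N i j x) \<partial>PP N) = integral\<^sup>L (distr (PP N) (Leb_N N) (TT N i j)) h"
    by (rule integral_distr[OF m2 h, symmetric])
  also have "\<dots> = (\<integral>x. h x \<partial>PP N)" by (simp add: PP_distr[OF assms(1,2)])
  finally show ?thesis .
qed

lemma proj0_TT: assumes "i < N" "j < N" "k < N"
  shows "proj0 N (TT N i j x) k = proj0 N x (sw i j k)"
proof -
  have "(\<Sum>l<N. TT N i j x l) = (\<Sum>l<N. x (sw i j l))" by (simp add: TT_def)
  also have "\<dots> = (\<Sum>l<N. x l)" by (rule sum_sw[OF assms(1,2)])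
  finally show ?thesis using assms by (simp add: proj0_def TT_def)
qed

lemma uu_TT: assumes "i < N" "j < N"
  shows "uu N (TT N i j x) i = uu N x j"
proof -
  have "norm_N N (proj0 N (TT N i j x)) = sqrt (\<Sum>k<N. (proj0 N x (sw i j k))\<^sup>2)"
    unfolding norm_N_def using proj0_TT[OF assms] by simp
  also have "\<dots> = norm_N N (proj0 N x)"
    unfolding norm_N_def using sum_sw[OF assms, of "\<lambda>k. (proj0 N x k)\<^sup>2"] by simp
  finally show ?thesis unfolding uu_def using proj0_TT[OF assms assms(1)] by (simp add: sw_def)
qed

lemma meas_PP: "f \<in> borel_measurable (Leb_N N) \<Longrightarrow> f \<in> borel_measurable (PP N)"
  using measurable_cong_sets[of "PP N" "Leb_N N" borel borel] by (simp add: PP_def)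

lemma uu_int: assumes "N \<ge> 1" "k < N" shows "integrable (PP N) (\<lambda>x. (uu N x k)\<^sup>2)" "integrable (PP N) (\<lambda>x. \<bar>uu N x k\<bar>)"
proof -
  interpret prob_space "PP N" by (rule PP_prob[OF assms(1)])
  have m: "(\<lambda>x. uu N x k) \<in> borel_measurable (PP N)" by (rule meas_PP[OF uu_meas[OF assms(2)]])
  have b: "\<bar>uu N x k\<bar> \<le> 1" for x by (rule uu_bound[OF assms(2)])
  show "integrable (PP N) (\<lambda>x. (uu N x k)\<^sup>2)"
    by (rule integrable_const_bound[where B=1]) (use m b in \<open>auto simp: abs_square_le_1\<close>)
  show "integrable (PP N) (\<lambda>x. \<bar>uu N x k\<bar>)"
    by (rule integrable_const_bound[where B=1]) (use m b in auto)
qed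

lemma uu_sq_int: assumes "N \<ge> 1" "i < N" shows "(\<integral>x. (uu N x i)\<^sup>2 \<partial>PP N) \<le> 1 / real N"
proof -
  interpret prob_space "PP N" by (rule PP_prob[OF assms(1)])
  have eq: "(\<integral>x. (uu N x k)\<^sup>2 \<partial>PP N) = (\<integral>x. (uu N x i)\<^sup>2 \<partial>PP N)" if "k < N" for k
  proof -
    have h: "(\<lambda>x. (uu N x i)\<^sup>2) \<in> borel_measurable (Leb_N N)" using uu_meas[OF assms(2)] by measurable
    have "(\<integral>x. (uu N (TT N i k x) i)\<^sup>2 \<partial>PP N) = (\<integral>x. (uu N x i)\<^sup>2 \<partial>PP N)"
      by (rule PP_swap_integral[OF assms(2) that h])
    then show ?thesis using uu_TT[OF assms(2) that] by simp
  qed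
  have "(\<Sum>k<N. (\<integral>x. (uu N x k)\<^sup>2 \<partial>PP N)) = (\<integral>x. (\<Sum>k<N. (uu N x k)\<^sup>2) \<partial>PP N)"
    using Bochner_Integration.integral_sum[where I="{..<N}" and M="PP N" and f="\<lambda>k x. (uu N x k)\<^sup>2"] uu_int[OF assms(1)] by simp
  also have "\<dots> \<le> (\<integral>x. 1 \<partial>PP N)"
    by (rule integral_mono) (use uu_int[OF assms(1)] sum_uu_sq in auto)
  also have "\<dots> = 1" by (simp add: prob_space)
  finally have "real N * (\<integral>x. (uu N x i)\<^sup>2 \<partial>PP N) \<le> 1" using eq by simp
  then show ?thesis using assms by (simp add: field_simps)
qed

lemma uu_abs_int: assumes "N \<ge> 1" "i < N" shows "sqrt (real N) * (\<integral>x. \<bar>uu N x i\<bar> \<partial>PP N) \<le> 1"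
proof -
  interpret prob_space "PP N" by (rule PP_prob[OF assms(1)])
  have pw: "sqrt (real N) * \<bar>u\<bar> \<le> (1 + real N * u\<^sup>2) / 2" for u :: real
  proof -
    have "0 \<le> (sqrt (real N) * \<bar>u\<bar> - 1)\<^sup>2" by simp
    also have "\<dots> = real N * u\<^sup>2 - 2 * (sqrt (real N) * \<bar>u\<bar>) + 1"
      by (simp add: power2_eq_square algebra_simps)
    finally show ?thesis by simp
  qed
  have "sqrt (real N) * (\<integral>x. \<bar>uu N x i\<bar> \<partial>PP N) = (\<integral>x. sqrt (real N) * \<bar>uu N x i\<bar> \<partial>PP N)"
    by simp
  also have "\<dots> \<le> (\<integral>x. (1 + real N * (uu N x i)\<^sup>2) / 2 \<partial>PP N)"
    by (rule integral_mono) (use uu_int[OF assms] pw in auto)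
  also have "\<dots> = (1 + real N * (\<integral>x. (uu N x i)\<^sup>2 \<partial>PP N)) / 2"
    using uu_int[OF assms] by (simp add: prob_space)
  also have "\<dots> \<le> (1 + real N * (1 / real N)) / 2"
    using uu_sq_int[OF assms] by (intro divide_right_mono add_left_mono mult_left_mono) auto
  also have "\<dots> = 1" using assms by simp
  finally show ?thesis .
qed

lemma f_cont:
  fixes f :: "(nat \<Rightarrow> real) \<Rightarrow> real"
  assumes fin: "finite I" and Lip: "\<forall>x y. \<bar>f x - f y\<bar> \<le> sqrt (\<Sum>i\<in>I. (x i - y i)\<^sup>2)"
  shows "continuous_on UNIV f"
proof (rule continuous_at_imp_continuous_on, intro ballI)
  fix x :: "nat \<Rightarrow> real"
  have ci: "((\<lambda>y. y i) \<longlongrightarrow> x i) (at x)" for i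
  proof -
    have "isCont (\<lambda>y::nat\<Rightarrow>real. y i) x"
      using continuous_on_product_coordinates[of i] continuous_on_eq_continuous_at[OF open_UNIV] by blast
    then show ?thesis by (simp add: isCont_def)
  qed
  have g0: "((\<lambda>y. \<Sum>i\<in>I. \<bar>y i - x i\<bar>) \<longlongrightarrow> (\<Sum>i\<in>I. \<bar>x i - x i\<bar>)) (at x)"
    by (intro tendsto_intros ci)
  have bound: "norm (f y - f x) \<le> (\<Sum>i\<in>I. \<bar>y i - x i\<bar>)" for y
  proof -
    have "\<bar>f y - f x\<bar> \<le> L2_set (\<lambda>i. y i - x i) I" using Lip by (simp add: L2_set_def)
    also have "\<dots> \<le> (\<Sum>i\<in>I. \<bar>y i - x i\<bar>)" by (rule L2_set_le_sum_abs)
    finally show ?thesis by simp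
  qed
  have "((\<lambda>y. f y - f x) \<longlongrightarrow> 0) (at x)"
    by (rule Lim_null_comparison[OF _ g0[simplified]]) (use bound in \<open>simp add: always_eventually\<close>)
  then show "isCont f x" unfolding isCont_def by (rule LIM_zero_cancel)
qed

lemma PI_meas: assumes "I \<subseteq> {..<N}"
  shows "P_I I \<in> borel_measurable (Pi\<^sub>M {..<N} (\<lambda>_. borel))"
proof (rule measurable_coordinatewise_then_product)
  fix i
  show "(\<lambda>x. P_I I x i) \<in> borel_measurable (Pi\<^sub>M {..<N} (\<lambda>_. borel))"
  proof (cases "i \<in> I")
    case True
    then have "i \<in> {..<N}" using assms by auto
    then show ?thesis using True by (simp add: P_I_def measurable_component_singleton)
  next
    case False
    then show ?thesis by (simp add: P_I_def)
  qed
qed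

lemma g_meas:
  fixes f :: "(nat \<Rightarrow> real) \<Rightarrow> real"
  assumes "finite I" "\<forall>x y. \<bar>f x - f y\<bar> \<le> sqrt (\<Sum>i\<in>I. (x i - y i)\<^sup>2)" "I \<subseteq> {..<N}"
  shows "(f \<circ> P_I I) \<in> borel_measurable (Pi\<^sub>M {..<N} (\<lambda>_. borel))"
  using measurable_comp[OF PI_meas[OF assms(3)] borel_measurable_continuous_onI[OF f_cont[OF assms(1,2)]]]
  by (simp add: comp_def)

lemma to_sphere_meas: "to_sphere m \<rho> N \<in> measurable (Leb_N N) (Pi\<^sub>M {..<N} (\<lambda>_. borel))"
  unfolding to_sphere_def
proof (rule measurable_restrict)
  fix i assume "i \<in> {..<N}"
  then have i: "i < N" by simp
  have "(\<lambda>x. m + sqrt ((\<rho> - m\<^sup>2) * real N) * uu N x i) \<in> borel_measurable (Leb_N N)"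
    using uu_meas[OF i] by measurable
  then show "(\<lambda>x. m + sqrt ((\<rho> - m\<^sup>2) * real N) * proj0 N x i / norm_N N (proj0 N x)) \<in> borel_measurable (Leb_N N)"
    by (simp add: uu_def)
qed

lemma MC_m_expect_eq:
  assumes "g \<in> borel_measurable (Pi\<^sub>M {..<N} (\<lambda>_. borel))"
  shows "MC_m_expect m \<rho> N g = (\<integral>x. g (to_sphere m \<rho> N x) \<partial>PP N)"
proof -
  have m: "to_sphere m \<rho> N \<in> measurable (PP N) (Pi\<^sub>M {..<N} (\<lambda>_. borel))"
    using to_sphere_meas measurable_cong_sets[of "PP N" "Leb_N N" "Pi\<^sub>M {..<N} (\<lambda>_. borel)" "Pi\<^sub>M {..<N} (\<lambda>_. borel)"]
    by (simp add: PP_def)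
  show ?thesis unfolding MC_m_expect_def mu_MC_m_def PP_def[symmetric]
    by (rule integral_distr[OF m assms])
qed

lemma MC_lip:
  fixes f :: "(nat \<Rightarrow> real) \<Rightarrow> real"
  assumes N: "N \<ge> 1" and fin: "finite I"
    and Lip: "\<forall>x y. \<bar>f x - f y\<bar> \<le> sqrt (\<Sum>i\<in>I. (x i - y i)\<^sup>2)"
    and IN: "I \<subseteq> {..<N}" and bnd: "\<forall>x. \<bar>f x\<bar> \<le> B"
  shows "\<bar>MC_m_expect m \<rho> N (f \<circ> P_I I) - MC_m_expect m' \<rho> N (f \<circ> P_I I)\<bar>
         \<le> real (card I) * (\<bar>m - m'\<bar> + \<bar>sqrt (\<rho> - m\<^sup>2) - sqrt (\<rho> - m'\<^sup>2)\<bar>)"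
proof -
  interpret prob_space "PP N" by (rule PP_prob[OF N])
  define g where "g = f \<circ> P_I I"
  have gm: "g \<in> borel_measurable (Pi\<^sub>M {..<N} (\<lambda>_. borel))"
    unfolding g_def by (rule g_meas[OF fin Lip IN])
  have tsm: "to_sphere a \<rho> N \<in> measurable (PP N) (Pi\<^sub>M {..<N} (\<lambda>_. borel))" for a
    using to_sphere_meas measurable_cong_sets[of "PP N" "Leb_N N" "Pi\<^sub>M {..<N} (\<lambda>_. borel)" "Pi\<^sub>M {..<N} (\<lambda>_. borel)"]
    by (simp add: PP_def)
  have Gm: "(\<lambda>x. g (to_sphere a \<rho> N x)) \<in> borel_measurable (PP N)" for a
    using measurable_comp[OF tsm gm] by (simp add: comp_def)
  have Gi: "integrable (PP N) (\<lambda>x. g (to_sphere a \<rho> N x))" for a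
    by (rule integrable_const_bound[where B=B]) (use Gm bnd in \<open>auto simp: g_def\<close>)
  let ?s = "sqrt (\<rho> - m\<^sup>2)" and ?s' = "sqrt (\<rho> - m'\<^sup>2)"
  let ?c1 = "\<bar>m - m'\<bar>" and ?c2 = "\<bar>?s - ?s'\<bar>"
  have coord: "to_sphere a \<rho> N x i = a + sqrt (\<rho> - a\<^sup>2) * (sqrt (real N) * uu N x i)" if "i \<in> I" for a x i
  proof -
    have "i < N" using that IN by auto
    then show ?thesis by (simp add: to_sphere_def uu_def real_sqrt_mult)
  qed
  have pw: "\<bar>g (to_sphere m \<rho> N x) - g (to_sphere m' \<rho> N x)\<bar> \<le> (\<Sum>i\<in>I. ?c1 + ?c2 * (sqrt (real N) * \<bar>uu N x i\<bar>))" for x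
  proof -
    let ?p = "to_sphere m \<rho> N x" and ?q = "to_sphere m' \<rho> N x"
    have "\<bar>g ?p - g ?q\<bar> \<le> sqrt (\<Sum>i\<in>I. (P_I I ?p i - P_I I ?q i)\<^sup>2)"
      using Lip by (simp add: g_def)
    also have "\<dots> = L2_set (\<lambda>i. ?p i - ?q i) I"
      unfolding L2_set_def by (intro arg_cong[where f=sqrt] sum.cong) (auto simp: P_I_def)
    also have "\<dots> \<le> (\<Sum>i\<in>I. \<bar>?p i - ?q i\<bar>)" by (rule L2_set_le_sum_abs)
    also have "\<dots> \<le> (\<Sum>i\<in>I. ?c1 + ?c2 * (sqrt (real N) * \<bar>uu N x i\<bar>))"
    proof (rule sum_mono)
      fix i assume i: "i \<in> I"
      have "?p i - ?q i = (m - m') + (?s - ?s') * (sqrt (real N) * uu N x i)"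
        using coord[OF i] by (simp add: algebra_simps)
      also have "\<bar>\<dots>\<bar> \<le> ?c1 + \<bar>(?s - ?s') * (sqrt (real N) * uu N x i)\<bar>" by (rule abs_triangle_ineq)
      also have "\<bar>(?s - ?s') * (sqrt (real N) * uu N x i)\<bar> = ?c2 * (sqrt (real N) * \<bar>uu N x i\<bar>)"
        by (simp add: abs_mult)
      finally show "\<bar>?p i - ?q i\<bar> \<le> ?c1 + ?c2 * (sqrt (real N) * \<bar>uu N x i\<bar>)" .
    qed
    finally show ?thesis .
  qed
  have ui: "integrable (PP N) (\<lambda>x. \<bar>uu N x i\<bar>)" if "i \<in> I" for i
    using uu_int(2)[OF N] that IN by auto
  have Ri: "integrable (PP N) (\<lambda>x. \<Sum>i\<in>I. ?c1 + ?c2 * (sqrt (real N) * \<bar>uu N x i\<bar>))"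
    using ui by (intro Bochner_Integration.integrable_sum integrable_add integrable_mult_right) auto
  have "\<bar>MC_m_expect m \<rho> N (f \<circ> P_I I) - MC_m_expect m' \<rho> N (f \<circ> P_I I)\<bar>
        = \<bar>(\<integral>x. g (to_sphere m \<rho> N x) \<partial>PP N) - (\<integral>x. g (to_sphere m' \<rho> N x) \<partial>PP N)\<bar>"
    using MC_m_expect_eq[OF gm] by (simp add: g_def)
  also have "\<dots> = \<bar>\<integral>x. g (to_sphere m \<rho> N x) - g (to_sphere m' \<rho> N x) \<partial>PP N\<bar>"
    using Gi by simp
  also have "\<dots> \<le> (\<integral>x. \<bar>g (to_sphere m \<rho> N x) - g (to_sphere m' \<rho> N x)\<bar> \<partial>PP N)"
    using integral_norm_bound[of "PP N" "\<lambda>x. g (to_sphere m \<rho> N x) - g (to_sphere m' \<rho> N x)"] by simp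
  also have "\<dots> \<le> (\<integral>x. (\<Sum>i\<in>I. ?c1 + ?c2 * (sqrt (real N) * \<bar>uu N x i\<bar>)) \<partial>PP N)"
    by (rule integral_mono[OF _ Ri pw]) (use Gi in auto)
  also have "\<dots> = (\<Sum>i\<in>I. ?c1 + ?c2 * (sqrt (real N) * (\<integral>x. \<bar>uu N x i\<bar> \<partial>PP N)))"
    using ui by (simp add: prob_space)
  also have "\<dots> \<le> (\<Sum>i\<in>I. ?c1 + ?c2)"
  proof (rule sum_mono)
    fix i assume "i \<in> I"
    then have "sqrt (real N) * (\<integral>x. \<bar>uu N x i\<bar> \<partial>PP N) \<le> 1" using uu_abs_int[OF N] IN by auto
    then show "?c1 + ?c2 * (sqrt (real N) * (\<integral>x. \<bar>uu N x i\<bar> \<partial>PP N)) \<le> ?c1 + ?c2"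
      by (metis abs_ge_zero add_left_mono mult_left_le)
  qed
  also have "\<dots> = real (card I) * (?c1 + ?c2)" by simp
  finally show ?thesis .
qed

lemma cont_by_bound:
  fixes F :: "real \<Rightarrow> real"
  assumes "\<And>x y. x \<in> S \<Longrightarrow> y \<in> S \<Longrightarrow> \<bar>F y - F x\<bar> \<le> h x y"
    and "\<And>x. x \<in> S \<Longrightarrow> ((\<lambda>y. h x y) \<longlongrightarrow> 0) (at x within S)"
  shows "continuous_on S F"
  unfolding continuous_on_def
proof (intro ballI)
  fix x assume x: "x \<in> S"
  have ev: "\<forall>\<^sub>F y in at x within S. norm (F y - F x) \<le> h x y"
    unfolding eventually_at_filter using assms(1)[OF x] by (simp add: always_eventually)
  have "((\<lambda>y. F y - F x) \<longlongrightarrow> 0) (at x within S)"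
    by (rule Lim_null_comparison[OF ev assms(2)[OF x]])
  then show "(F \<longlongrightarrow> F x) (at x within S)" by (rule LIM_zero_cancel)
qed

lemma ratio_bound:
  fixes W G K :: "real \<Rightarrow> real" and S :: "real set"
  assumes S: "S \<in> sets lborel"
    and Wi: "set_integrable lborel S W" and W0: "\<And>x. x \<in> S \<Longrightarrow> 0 \<le> W x"
    and Gm: "set_borel_measurable lborel S G" and Gb: "\<And>x. x \<in> S \<Longrightarrow> \<bar>G x\<bar> \<le> B"
    and K: "\<And>x. x \<in> S \<Longrightarrow> \<bar>c - G x\<bar> \<le> K x"
    and WKi: "set_integrable lborel S (\<lambda>x. W x * K x)"
    and D: "(LINT x:S|lborel. W x) > 0"
  shows "\<bar>c - (LINT x:S|lborel. W x * G x) / (LINT x:S|lborel. W x)\<bar>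
         \<le> (LINT x:S|lborel. W x * K x) / (LINT x:S|lborel. W x)"
proof -
  let ?D = "LINT x:S|lborel. W x"
  have Wm: "set_borel_measurable lborel S W" using Wi unfolding set_integrable_def set_borel_measurable_def by (rule borel_measurable_integrable)
  have WGi: "set_integrable lborel S (\<lambda>x. W x * G x)"
    unfolding set_integrable_def
  proof (rule Bochner_Integration.integrable_bound)
    show "integrable lborel (\<lambda>x. indicator S x *\<^sub>R (B * W x))"
      using Wi unfolding set_integrable_def by (simp add: integrable_mult_right algebra_simps)
    have "(\<lambda>x. indicator S x *\<^sub>R W x * (indicator S x *\<^sub>R G x)) \<in> borel_measurable lborel"
      using Wm Gm unfolding set_borel_measurable_def by measurable
    then show "(\<lambda>x. indicator S x *\<^sub>R (W x * G x)) \<in> borel_measurable lborel"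
      by (rule measurable_cong[THEN iffD1, rotated]) (simp add: indicator_def)
    show "AE x in lborel. norm (indicator S x *\<^sub>R (W x * G x)) \<le> norm (indicator S x *\<^sub>R (B * W x))"
    proof (rule AE_I2)
      fix x show "norm (indicator S x *\<^sub>R (W x * G x)) \<le> norm (indicator S x *\<^sub>R (B * W x))"
      proof (cases "x \<in> S")
        case True
        have "\<bar>W x * G x\<bar> \<le> W x * B" using W0[OF True] Gb[OF True] by (simp add: abs_mult mult_left_mono)
        then show ?thesis using True W0[OF True] Gb[OF True] by (simp add: abs_mult mult.commute)
      qed simp
    qed
  qed
  have eq: "c - (LINT x:S|lborel. W x * G x) / ?D = (LINT x:S|lborel. W x * (c - G x)) / ?D"
  proof -
    have "(LINT x:S|lborel. W x * (c - G x)) = (LINT x:S|lborel. c * W x - W x * G x)"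
      by (simp add: algebra_simps)
    also have "\<dots> = c * ?D - (LINT x:S|lborel. W x * G x)"
      using Wi WGi by (simp add: set_integral_diff)
    finally show ?thesis using D by (simp add: field_simps)
  qed
  have WcGi: "set_integrable lborel S (\<lambda>x. W x * (c - G x))"
  proof -
    have "set_integrable lborel S (\<lambda>x. c * W x - W x * G x)"
      using Wi WGi by (intro set_integral_diff) auto
    then show ?thesis by (simp add: algebra_simps)
  qed
  have up: "(LINT x:S|lborel. W x * (c - G x)) \<le> (LINT x:S|lborel. W x * K x)"
    by (rule set_integral_mono[OF WcGi WKi]) (use K W0 in \<open>auto intro!: mult_left_mono simp: abs_le_iff\<close>)
  have lo: "- (LINT x:S|lborel. W x * K x) \<le> (LINT x:S|lborel. W x * (c - G x))"
  proof -
    have "(LINT x:S|lborel. - (W x * K x)) \<le> (LINT x:S|lborel. W x * (c - G x))"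
    proof (rule set_integral_mono)
      show "set_integrable lborel S (\<lambda>x. - (W x * K x))" using WKi by (simp add: set_integrable_def)
      show "set_integrable lborel S (\<lambda>x. W x * (c - G x))" by (rule WcGi)
      fix x assume x: "x \<in> S"
      have "- K x \<le> c - G x" using K[OF x] by (simp add: abs_le_iff)
      then have "W x * (- K x) \<le> W x * (c - G x)" using W0[OF x] by (rule mult_left_mono)
      then show "- (W x * K x) \<le> W x * (c - G x)" by simp
    qed
    moreover have "(LINT x:S|lborel. - (W x * K x)) = - (LINT x:S|lborel. W x * K x)"
      by (simp add: set_lebesgue_integral_def)
    ultimately show ?thesis by simp
  qed
  show ?thesis unfolding eq using up lo D by (simp add: abs_le_iff divide_right_mono)
qed

lemma ln_upper:
  fixes y R :: real
  assumes y: "y > -1" and R: "1 + y \<le> R" "R \<ge> 1"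
  shows "ln (1 + y) - y \<le> - y\<^sup>2 / (2 * R)"
proof -
  define h where "h z = ln (1 + z) - z + z\<^sup>2 / (2 * R)" for z :: real
  have Rp: "R > 0" using R by simp
  have d: "DERIV h z :> (z * (1 / R - 1 / (1 + z)))" if "z > -1" for z
  proof -
    have "DERIV h z :> (1 / (1 + z) - 1 + 2 * z / (2 * R))"
      unfolding h_def using that Rp by (auto intro!: derivative_eq_intros)
    moreover have "1 / (1 + z) - 1 + 2 * z / (2 * R) = z * (1 / R - 1 / (1 + z))"
      using that Rp by (simp add: field_simps)
    ultimately show ?thesis by simp
  qed
  have "h y \<le> h 0"
  proof (cases "y \<ge> 0")
    case True
    show ?thesis
    proof (rule DERIV_nonpos_imp_nonincreasing[where f=h, OF True])
      fix z assume z: "0 \<le> z" "z \<le> y"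
      have "1 / R \<le> 1 / (1 + z)" using z R by (intro divide_left_mono) auto
      then have "z * (1 / R - 1 / (1 + z)) \<le> 0" using z by (simp add: mult_nonneg_nonpos)
      then show "\<exists>yy. DERIV h z :> yy \<and> yy \<le> 0" using d[of z] z by auto
    qed
  next
    case False
    show ?thesis
    proof (rule DERIV_nonneg_imp_nondecreasing[where f=h])
      show "y \<le> 0" using False by simp
      fix z assume z: "y \<le> z" "z \<le> 0"
      have "1 / R \<le> 1 / (1 + z)" using z R y by (intro divide_left_mono) auto
      then have "0 \<le> z * (1 / R - 1 / (1 + z))" using z by (simp add: mult_nonpos_nonpos)
      then show "\<exists>yy. DERIV h z :> yy \<and> yy \<ge> 0" using d[of z] z y by auto
    qed
  qed
  then show ?thesis by (simp add: h_def)
qed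

lemma ln_lower:
  fixes y :: real
  assumes "\<bar>y\<bar> \<le> 1/2"
  shows "ln (1 + y) - y \<ge> - 2 * y\<^sup>2"
proof (cases "y \<ge> 0")
  case True
  then have "y - y\<^sup>2 \<le> ln (1 + y)" using assms by (intro ln_one_plus_pos_lower_bound) auto
  moreover have "y * y \<ge> 0" by simp
  ultimately show ?thesis unfolding power2_eq_square by linarith
next
  case False
  then have "- (-y) - 2 * (-y)\<^sup>2 \<le> ln (1 - (-y))" using assms by (intro ln_one_minus_pos_lower_bound) auto
  then show ?thesis by simp
qed

lemma exp_neg_le_inv: "z > 0 \<Longrightarrow> exp (- z) \<le> 1 / (z::real)"
proof -
  assume z: "z > 0"
  have "z \<le> exp z" using exp_ge_add_one_self[of z] by linarith
  then have "z * exp (- z) \<le> 1" using z by (simp add: exp_minus field_simps)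
  then show ?thesis using z by (simp add: field_simps)
qed

lemma int_inv_sqrt:
  fixes a J :: real
  assumes a: "a < 0" and J: "J > 0"
  shows "set_integrable lborel {a<..<0} (\<lambda>x. 1 / sqrt (-2*x/J))"
    and "(LINT x:{a<..<0}|lborel. 1 / sqrt (-2*x/J)) = J * sqrt (-2*a/J)"
proof -
  define F where "F x = - J * sqrt (-2*x/J)" for x :: real
  have ei: "einterval (ereal a) (ereal 0) = {a<..<0}" by (auto simp: einterval_def)
  have deriv: "DERIV F x :> 1 / sqrt (-2*x/J)" if "x < 0" for x
  proof -
    have pos: "-2*x/J > 0" using that J divide_pos_pos[of "-2*x" J] by simp
    have "DERIV F x :> - J * (inverse (sqrt (-2*x/J)) / 2 * (-2 / J))"
      unfolding F_def using pos by (auto intro!: derivative_eq_intros)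
    moreover have "- J * (inverse (sqrt (-2*x/J)) / 2 * (-2 / J)) = 1 / sqrt (-2*x/J)"
      using J by (simp add: field_simps)
    ultimately show ?thesis by simp
  qed
  have cont: "isCont (\<lambda>x. 1 / sqrt (-2*x/J)) x" if "x < 0" for x
  proof -
    have "-2*x/J > 0" using that J divide_pos_pos[of "-2*x" J] by simp
    then show ?thesis by (intro continuous_intros) auto
  qed
  have A: "((F \<circ> real_of_ereal) \<longlongrightarrow> F a) (at_right (ereal a))"
    unfolding ereal_tendsto_simps1 F_def using J by (intro tendsto_intros) auto
  have B: "((F \<circ> real_of_ereal) \<longlongrightarrow> F 0) (at_left (ereal 0))"
    unfolding ereal_tendsto_simps1 F_def using J by (intro tendsto_intros) auto
  have nn: "AE x in lborel. ereal a < ereal x \<longrightarrow> ereal x < ereal 0 \<longrightarrow> 0 \<le> 1 / sqrt (-2*x/J)"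
  proof (intro AE_I2 impI)
    fix x assume "ereal x < ereal 0"
    then have "x < 0" by simp
    then have "-2*x/J > 0" using J divide_pos_pos[of "-2*x" J] by simp
    then show "0 \<le> 1 / sqrt (-2*x/J)" by simp
  qed
  have deriv': "DERIV F x :> 1 / sqrt (-2*x/J)" if "ereal a < ereal x" "ereal x < ereal 0" for x
    using deriv that by simp
  have cont': "isCont (\<lambda>x. 1 / sqrt (-2*x/J)) x" if "ereal a < ereal x" "ereal x < ereal 0" for x
    using cont that by simp
  have lt: "ereal a < ereal 0" using a by simp
  note R = interval_integral_FTC_nonneg[where F=F and f="\<lambda>x. 1 / sqrt (-2*x/J)", OF lt deriv' cont' nn A B]
  show "set_integrable lborel {a<..<0} (\<lambda>x. 1 / sqrt (-2*x/J))"
    using R(1) unfolding ei .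
  have "(LBINT x=ereal a..ereal 0. 1 / sqrt (-2*x/J)) = F 0 - F a" by (rule R(2))
  moreover have "(LBINT x=ereal a..ereal 0. 1 / sqrt (-2*x/J)) = (LINT x:{a<..<0}|lborel. 1 / sqrt (-2*x/J))"
    using lt unfolding interval_lebesgue_integral_def ei by simp
  moreover have "F 0 - F a = J * sqrt (-2*a/J)" by (simp add: F_def)
  ultimately show "(LINT x:{a<..<0}|lborel. 1 / sqrt (-2*x/J)) = J * sqrt (-2*a/J)" by simp
qed

lemma ei_eq: "einterval (ereal u) (ereal v) = {u<..<v}"
  by (auto simp: einterval_def)

lemma int_gauss_abs:
  fixes a b e q :: real
  assumes ae: "a \<le> e" and eb: "e \<le> b" and q: "q > 0"
  shows "set_integrable lborel {a<..<b} (\<lambda>x. exp (- q * (x - e)\<^sup>2) * \<bar>x - e\<bar>)"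
    and "(LINT x:{a<..<b}|lborel. exp (- q * (x - e)\<^sup>2) * \<bar>x - e\<bar>) \<le> 1 / q"
proof -
  let ?h = "\<lambda>x. exp (- q * (x - e)\<^sup>2) * \<bar>x - e\<bar>"
  have ic: "isCont ?h x" for x by (intro continuous_intros)
  have ii: "interval_lebesgue_integrable lborel (ereal u) (ereal v) ?h" for u v
    by (rule interval_integrable_isCont) (simp add: ic)
  have ab: "a \<le> b" using ae eb by simp
  show "set_integrable lborel {a<..<b} ?h"
    using ii[of a b] ab by (simp add: interval_lebesgue_integrable_def ei_eq)
  have sum: "(LBINT x=ereal a..ereal e. ?h x) + (LBINT x=ereal e..ereal b. ?h x) = (LBINT x=ereal a..ereal b. ?h x)"
    by (rule interval_integral_sum) (use ii ae eb in \<open>simp add: min_def max_def\<close>)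
  define F1 where "F1 x = exp (- q * (x - e)\<^sup>2) / (2 * q)" for x
  define F2 where "F2 x = - exp (- q * (x - e)\<^sup>2) / (2 * q)" for x
  have dF1: "DERIV F1 x :> exp (- q * (x - e)\<^sup>2) * (- q * (2 * (x - e))) / (2 * q)" for x
    unfolding F1_def by (auto intro!: derivative_eq_intros)
  have dF2: "DERIV F2 x :> - (exp (- q * (x - e)\<^sup>2) * (- q * (2 * (x - e)))) / (2 * q)" for x
    unfolding F2_def by (auto intro!: derivative_eq_intros)
  have I1: "(LBINT x=ereal a..ereal e. ?h x) = F1 e - F1 a"
  proof (rule interval_integral_FTC_finite)
    show "continuous_on {min a e..max a e} ?h" by (intro continuous_intros)
    fix x assume x: "min a e \<le> x" "x \<le> max a e"
    then have "x \<le> e" using ae by simp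
    then have "exp (- q * (x - e)\<^sup>2) * (- q * (2 * (x - e))) / (2 * q) = ?h x"
      using q by (simp add: abs_if field_simps)
    then have "DERIV F1 x :> ?h x" using dF1[of x] by simp
    then show "(F1 has_vector_derivative ?h x) (at x within {min a e..max a e})"
      by (simp add: has_real_derivative_iff_has_vector_derivative has_vector_derivative_at_within)
  qed
  have I2: "(LBINT x=ereal e..ereal b. ?h x) = F2 b - F2 e"
  proof (rule interval_integral_FTC_finite)
    show "continuous_on {min e b..max e b} ?h" by (intro continuous_intros)
    fix x assume x: "min e b \<le> x" "x \<le> max e b"
    then have "e \<le> x" using eb by simp
    then have "- (exp (- q * (x - e)\<^sup>2) * (- q * (2 * (x - e)))) / (2 * q) = ?h x"
      using q by (simp add: abs_if field_simps)
    then have "DERIV F2 x :> ?h x" using dF2[of x] by simp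
    then show "(F2 has_vector_derivative ?h x) (at x within {min e b..max e b})"
      by (simp add: has_real_derivative_iff_has_vector_derivative has_vector_derivative_at_within)
  qed
  have "F1 e - F1 a \<le> 1 / (2 * q)" using q by (simp add: F1_def)
  moreover have "F2 b - F2 e \<le> 1 / (2 * q)" using q by (simp add: F2_def)
  ultimately have "(LBINT x=ereal a..ereal b. ?h x) \<le> 1 / q"
    using sum I1 I2 by simp
  then show "(LINT x:{a<..<b}|lborel. ?h x) \<le> 1 / q"
    using ab by (simp add: interval_lebesgue_integral_def ei_eq)
qed

lemma int_exp:
  fixes a k :: real
  assumes a: "a \<le> 0" and k: "k > 0"
  shows "set_integrable lborel {a<..<0} (\<lambda>x. exp (k * x))"
    and "(LINT x:{a<..<0}|lborel. exp (k * x)) \<le> 1 / k"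
proof -
  have ii: "interval_lebesgue_integrable lborel (ereal a) (ereal 0) (\<lambda>x. exp (k * x))"
    by (rule interval_integrable_isCont) simp
  show "set_integrable lborel {a<..<0} (\<lambda>x. exp (k * x))"
    using ii a by (simp add: interval_lebesgue_integrable_def ei_eq)
  define F where "F x = exp (k * x) / k" for x
  have I: "(LBINT x=ereal a..ereal 0. exp (k * x)) = F 0 - F a"
  proof (rule interval_integral_FTC_finite)
    show "continuous_on {min a 0..max a 0} (\<lambda>x. exp (k * x))" by (intro continuous_intros)
    fix x
    have "DERIV F x :> exp (k * x) * k / k" unfolding F_def by (auto intro!: derivative_eq_intros)
    then have "DERIV F x :> exp (k * x)" using k by simp
    then show "(F has_vector_derivative exp (k * x)) (at x within {min a 0..max a 0})"
      by (simp add: has_real_derivative_iff_has_vector_derivative has_vector_derivative_at_within)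
  qed
  have "F 0 - F a \<le> 1 / k" using k by (simp add: F_def)
  then show "(LINT x:{a<..<0}|lborel. exp (k * x)) \<le> 1 / k"
    using I a by (simp add: interval_lebesgue_integral_def ei_eq)
qed

lemma W_repr:
  fixes J \<rho> \<epsilon> \<beta> x :: real and N :: nat
  assumes J: "J > 0" and t0: "\<rho> + 2*\<epsilon>/J > 0" and xa: "\<rho> + 2*x/J > 0"
    and beta: "\<beta> = (1/J) / (\<rho> + 2*\<epsilon>/J)"
  shows "exp (-\<beta>*x*real N) * ((\<rho> + 2*x/J) powr ((real N - 3)/2))
       = exp (-\<beta>*\<epsilon>*real N + ((real N - 3)/2) * ln (\<rho> + 2*\<epsilon>/J))
         * exp (((real N - 3)/2) * (ln (1 + 2*(x-\<epsilon>)/(J*(\<rho> + 2*\<epsilon>/J))) - 2*(x-\<epsilon>)/(J*(\<rho> + 2*\<epsilon>/J)))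
                - 3 * (2*(x-\<epsilon>)/(J*(\<rho> + 2*\<epsilon>/J))) / 2)"
proof -
  define t0 where "t0 = \<rho> + 2*\<epsilon>/J"
  define y where "y = 2*(x-\<epsilon>)/(J*t0)"
  define M where "M = (real N - 3)/2"
  have t0p: "t0 > 0" using t0 by (simp add: t0_def)
  have t0y: "t0 * y = 2*(x-\<epsilon>)/J" using t0p J by (simp add: y_def field_simps)
  have ty: "\<rho> + 2*x/J = t0 * (1 + y)"
    unfolding distrib_left t0y using J by (simp add: t0_def field_simps)
  have y1: "1 + y > 0" using ty xa t0p by (metis zero_less_mult_pos)
  have lnt: "ln (\<rho> + 2*x/J) = ln t0 + ln (1 + y)" using ty t0p y1 by (simp add: ln_mult)
  have b2: "\<beta> = 1 / (J * t0)" using beta by (simp add: t0_def)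
  have by2: "\<beta> * (x - \<epsilon>) = y / 2" unfolding b2 y_def using J t0p by (simp add: field_simps)
  have "exp (-\<beta>*x*real N) * ((\<rho> + 2*x/J) powr M) = exp (-\<beta>*x*real N + M * ln (\<rho> + 2*x/J))"
    using xa by (simp add: powr_def exp_add[symmetric])
  also have "-\<beta>*x*real N + M * ln (\<rho> + 2*x/J)
      = (-\<beta>*\<epsilon>*real N + M * ln t0) + (M * (ln (1 + y) - y) - 3 * y / 2)"
  proof -
    have bx: "\<beta>*x = \<beta>*\<epsilon> + y/2" using by2 by (simp add: algebra_simps)
    have "-\<beta>*x*real N = -(\<beta>*\<epsilon> + y/2) * real N" by (simp add: bx)
    also have "real N = 2 * M + 3" by (simp add: M_def field_simps)
    also have "-(\<beta>*\<epsilon> + y/2) * (2 * M + 3) = -\<beta>*\<epsilon>*(2 * M + 3) - y / 2 * (2 * M + 3)"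
      by (simp add: algebra_simps)
    finally have e: "-\<beta>*x*(2 * M + 3) = -\<beta>*\<epsilon>*(2 * M + 3) - y / 2 * (2 * M + 3)" .
    have NM: "real N = 2 * M + 3" by (simp add: M_def field_simps)
    show ?thesis unfolding lnt NM using e by (simp add: algebra_simps)
  qed
  finally have "exp (-\<beta>*x*real N) * ((\<rho> + 2*x/J) powr M)
      = exp (-\<beta>*\<epsilon>*real N + M * ln t0) * exp (M * (ln (1 + y) - y) - 3 * y / 2)"
    by (simp add: exp_add)
  then show ?thesis by (simp only: y_def t0_def M_def)
qed

lemma S_facts:
  fixes J \<rho> x :: real
  assumes J: "J > 0" and x: "x \<in> {-\<rho>*J/2<..<0}"
  shows "\<rho> + 2*x/J > 0" "-2*x/J > 0" "-2*x/J < \<rho>" "\<rho> + 2*x/J < \<rho>"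
proof -
  have x1: "-\<rho>*J/2 < x" and x2: "x < 0" using x by auto
  have "-\<rho>*J < 2*x" using x1 by simp
  then have "-\<rho> < 2*x/J" using J by (simp add: field_simps)
  then show "\<rho> + 2*x/J > 0" by simp
  show "-2*x/J > 0" using x2 J divide_pos_pos[of "-2*x" J] by simp
  then show "-2*x/J < \<rho>" using \<open>-\<rho> < 2*x/J\<close> by simp
  have "2*x/J < 0" using x2 J by (simp add: divide_neg_pos)
  then show "\<rho> + 2*x/J < \<rho>" by simp
qed

lemma W_cont:
  fixes J \<rho> \<beta> :: real
  assumes J: "J > 0"
  shows "continuous_on {-\<rho>*J/2<..<0} (\<lambda>x. exp (-\<beta>*x*real N) * Z_MC J x \<rho> N)"
  unfolding Z_MC_def
proof (intro continuous_intros)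
  have a: "\<rho> + 2*x/J \<noteq> 0" "sqrt (-2*x/J) \<noteq> 0" if "x \<in> {-\<rho>*J/2<..<0}" for x
    using S_facts[OF J that] by auto
  show "\<forall>x\<in>{-\<rho>*J/2<..<0}. J \<noteq> 0" using J by simp
  show "\<forall>x\<in>{-\<rho>*J/2<..<0}. \<rho> + 2*x/J \<noteq> 0" using a(1) by blast
  show "\<forall>x\<in>{-\<rho>*J/2<..<0}. sqrt (-2*x/J) \<noteq> 0" using a(2) by blast
qed (use J in simp)

lemma int_lower:
  fixes W :: "real \<Rightarrow> real" and S :: "real set"
  assumes Wi: "set_integrable lborel S W" and W0: "\<And>x. x \<in> S \<Longrightarrow> 0 \<le> W x"
    and uv: "u \<le> v" and sub: "{u<..<v} \<subseteq> S" and c: "\<And>x. x \<in> {u<..<v} \<Longrightarrow> c \<le> W x" and c0: "0 \<le> c"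
  shows "c * (v - u) \<le> (LINT x:S|lborel. W x)"
proof -
  have ii: "integrable lborel (\<lambda>x. indicator {u<..<v} x * c)"
    using uv by (intro integrable_mult_left integrable_real_indicator) (auto simp: emeasure_lborel_Ioo)
  have "(\<integral>x. indicator {u<..<v} x * c \<partial>lborel) \<le> (\<integral>x. indicator S x * W x \<partial>lborel)"
  proof (rule integral_mono[OF ii])
    show "integrable lborel (\<lambda>x. indicator S x * W x)" using Wi by (simp add: set_integrable_def)
    fix x show "indicator {u<..<v} x * c \<le> indicator S x * W x"
      using sub c W0 c0 by (auto simp: indicator_def)
  qed
  moreover have "(\<integral>x. indicator {u<..<v} x * c \<partial>lborel) = c * (v - u)"
    using uv by (simp add: measure_lborel_Ioo)
  ultimately show ?thesis by (simp add: set_lebesgue_integral_def mult.commute measure_lborel_Ioo[OF uv])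
qed

lemma case_neg_pw:
  fixes J \<rho> \<epsilon> \<beta> :: real and N :: nat
  assumes J: "J > 0" and \<rho>: "\<rho> > 0" and ea: "-\<rho>*J/2 < \<epsilon>" and e0: "\<epsilon> < 0"
    and beta: "\<beta> = (1/J)/(\<rho> + 2*\<epsilon>/J)" and N: "N \<ge> 6"
  defines "t0 \<equiv> \<rho> + 2*\<epsilon>/J"
  defines "R \<equiv> \<rho> / t0"
  defines "Mh \<equiv> (real N - 3)/2"
  defines "q \<equiv> Mh * (2/(J*t0))\<^sup>2 / (2*R)"
  defines "E \<equiv> exp (-\<beta>*\<epsilon>*real N + Mh * ln t0)"
  defines "\<delta> \<equiv> J*t0/(2* sqrt (real N))"
  shows "\<And>x. x \<in> {-\<rho>*J/2<..<0} \<Longrightarrow> exp (-\<beta>*x*real N) * Z_MC J x \<rho> N \<le> E * exp (3/2) * exp (-q*(x-\<epsilon>)\<^sup>2) / sqrt (-2*x/J)"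
    and "\<And>x. x \<in> {\<epsilon>-\<delta><..<\<epsilon>} \<Longrightarrow> x \<in> {-\<rho>*J/2<..<0} \<and> E * exp (-1) / sqrt \<rho> \<le> exp (-\<beta>*x*real N) * Z_MC J x \<rho> N"
proof -
  have t0p: "t0 > 0"
  proof -
    have "-\<rho>*J < 2*\<epsilon>" using ea by simp
    then have "-\<rho> < 2*\<epsilon>/J" using J by (simp add: field_simps)
    then show ?thesis by (simp add: t0_def)
  qed
  have t0r: "t0 \<le> \<rho>" using e0 J by (simp add: t0_def divide_neg_pos less_imp_le)
  have R1: "R \<ge> 1" using t0p t0r by (simp add: R_def field_simps)
  have Mh0: "Mh \<ge> 0" using N by (simp add: Mh_def)
  have E0: "E > 0" by (simp add: E_def)
  have repr: "exp (-\<beta>*x*real N) * Z_MC J x \<rho> N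
      = E * exp (Mh * (ln (1 + 2*(x-\<epsilon>)/(J*t0)) - 2*(x-\<epsilon>)/(J*t0)) - 3 * (2*(x-\<epsilon>)/(J*t0)) / 2) / sqrt (-2*x/J)"
    if x: "x \<in> {-\<rho>*J/2<..<0}" for x
  proof -
    have "\<rho> + 2*x/J > 0" using S_facts[OF J x] by simp
    from W_repr[OF J _ this beta, of N] t0p
    show ?thesis unfolding Z_MC_def by (simp add: t0_def E_def Mh_def)
  qed
  show "exp (-\<beta>*x*real N) * Z_MC J x \<rho> N \<le> E * exp (3/2) * exp (-q*(x-\<epsilon>)\<^sup>2) / sqrt (-2*x/J)"
    if x: "x \<in> {-\<rho>*J/2<..<0}" for x
  proof -
    define y where "y = 2*(x-\<epsilon>)/(J*t0)"
    have tx: "\<rho> + 2*x/J > 0" "-2*x/J > 0" "\<rho> + 2*x/J < \<rho>" using S_facts[OF J x] by auto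
    have ty: "t0 * (1 + y) = \<rho> + 2*x/J"
    proof -
      have "t0 * y = 2*(x-\<epsilon>)/J" using t0p J by (simp add: y_def field_simps)
      then show ?thesis using J by (simp add: distrib_left t0_def field_simps)
    qed
    have y1: "y > -1"
    proof -
      have "t0 * (1 + y) > 0" using ty tx by simp
      then have "1 + y > 0" using t0p by (simp add: zero_less_mult_iff)
      then show ?thesis by simp
    qed
    have yR: "1 + y \<le> R"
    proof -
      have "t0 * (1 + y) \<le> \<rho>" using ty tx by simp
      then show ?thesis using t0p by (simp add: R_def field_simps)
    qed
    have lu: "ln (1 + y) - y \<le> - y\<^sup>2 / (2 * R)" by (rule ln_upper[OF y1 yR R1])
    have qy: "Mh * (- y\<^sup>2 / (2 * R)) = - q * (x-\<epsilon>)\<^sup>2"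
      unfolding q_def y_def power_divide power_mult_distrib using J t0p R1 by (simp add: field_simps power2_eq_square)
    have "Mh * (ln (1 + y) - y) - 3 * y / 2 \<le> - q * (x-\<epsilon>)\<^sup>2 + 3/2"
    proof -
      have "Mh * (ln (1 + y) - y) \<le> Mh * (- y\<^sup>2 / (2 * R))" using lu Mh0 by (rule mult_left_mono)
      then show ?thesis using qy y1 by linarith
    qed
    then have "exp (Mh * (ln (1 + y) - y) - 3 * y / 2) \<le> exp (3/2) * exp (-q*(x-\<epsilon>)\<^sup>2)"
      by (simp add: exp_add[symmetric] add.commute)
    then have "E * exp (Mh * (ln (1 + y) - y) - 3 * y / 2) / sqrt (-2*x/J) \<le> E * (exp (3/2) * exp (-q*(x-\<epsilon>)\<^sup>2)) / sqrt (-2*x/J)"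
      using E0 tx by (intro divide_right_mono mult_left_mono) auto
    then show ?thesis using repr[OF x] by (simp add: y_def mult.assoc)
  qed
  show "x \<in> {-\<rho>*J/2<..<0} \<and> E * exp (-1) / sqrt \<rho> \<le> exp (-\<beta>*x*real N) * Z_MC J x \<rho> N"
    if x: "x \<in> {\<epsilon>-\<delta><..<\<epsilon>}" for x
  proof -
    define y where "y = 2*(x-\<epsilon>)/(J*t0)"
    have sN: "sqrt (real N) \<ge> 2"
    proof -
      have "sqrt 4 \<le> sqrt (real N)" using N by (intro real_sqrt_le_mono) simp
      then show ?thesis by simp
    qed
    have yd: "y > - 1 / sqrt (real N)" "y < 0"
    proof -
      have "x - \<epsilon> > -\<delta>" using x by simp
      then have "2*(x-\<epsilon>)/(J*t0) > 2*(-\<delta>)/(J*t0)" using J t0p by (intro divide_strict_right_mono) auto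
      moreover have "2*(-\<delta>)/(J*t0) = - 1 / sqrt (real N)" using J t0p sN by (simp add: \<delta>_def field_simps)
      ultimately show "y > - 1 / sqrt (real N)" by (simp add: y_def)
      show "y < 0" using x J t0p by (simp add: y_def divide_neg_pos)
    qed
    have yh: "\<bar>y\<bar> \<le> 1/2"
    proof -
      have "1 / sqrt (real N) \<le> 1/2" using sN by (simp add: divide_simps)
      then show ?thesis using yd by simp
    qed
    have y2: "y\<^sup>2 \<le> 1 / real N"
    proof -
      have "\<bar>y\<bar> \<le> 1 / sqrt (real N)" using yd by simp
      then have "\<bar>y\<bar>\<^sup>2 \<le> (1 / sqrt (real N))\<^sup>2" by (intro power_mono) auto
      then show ?thesis using N by (simp add: power_divide)
    qed
    have t0y: "t0 * y = 2*(x-\<epsilon>)/J" using t0p J by (simp add: y_def field_simps)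
    have xS: "x \<in> {-\<rho>*J/2<..<0}"
    proof -
      have "t0 * (1 + y) > 0" using yh t0p by (intro mult_pos_pos) auto
      then have "\<rho> + 2*x/J > 0" using t0y J by (simp add: distrib_left t0_def field_simps)
      then have "-\<rho>*J/2 < x" using J by (simp add: field_simps)
      moreover have "x < 0" using x e0 by simp
      ultimately show ?thesis by simp
    qed
    have tx: "-2*x/J > 0" "-2*x/J < \<rho>" using S_facts[OF J xS] by auto
    have ll: "ln (1 + y) - y \<ge> - 2 * y\<^sup>2" by (rule ln_lower[OF yh])
    have "Mh * (ln (1 + y) - y) - 3 * y / 2 \<ge> -1"
    proof -
      have "Mh * (ln (1 + y) - y) \<ge> Mh * (- 2 * y\<^sup>2)" using ll Mh0 by (rule mult_left_mono)
      moreover have "Mh * (2 * y\<^sup>2) \<le> 1"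
      proof -
        have "Mh * (2 * y\<^sup>2) \<le> Mh * (2 * (1 / real N))" using y2 Mh0 by (intro mult_left_mono) auto
        also have "\<dots> \<le> 1" using N by (simp add: Mh_def field_simps)
        finally show ?thesis .
      qed
      ultimately show ?thesis using yd by (simp add: algebra_simps)
    qed
    then have e1: "exp (-1) \<le> exp (Mh * (ln (1 + y) - y) - 3 * y / 2)" by simp
    have s1: "sqrt (-2*x/J) \<le> sqrt \<rho>" using tx by (intro real_sqrt_le_mono) auto
    have "E * exp (-1) / sqrt \<rho> \<le> E * exp (Mh * (ln (1 + y) - y) - 3 * y / 2) / sqrt \<rho>"
      using e1 E0 \<rho> by (intro divide_right_mono mult_left_mono) auto
    also have "\<dots> \<le> E * exp (Mh * (ln (1 + y) - y) - 3 * y / 2) / sqrt (-2*x/J)"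
      using s1 tx E0 by (intro divide_left_mono mult_pos_pos) auto
    finally show ?thesis using repr[OF xS] xS by (simp add: y_def)
  qed
qed


lemma case_neg:
  fixes J \<rho> \<epsilon> \<beta> :: real
  assumes J: "J > 0" and \<rho>: "\<rho> > 0" and ea: "-\<rho>*J/2 < \<epsilon>" and e0: "\<epsilon> < 0"
    and beta: "\<beta> = (1/J)/(\<rho> + 2*\<epsilon>/J)"
  shows "\<exists>C. \<forall>N\<ge>6.
     set_integrable lborel {-\<rho>*J/2<..<0} (\<lambda>x. exp (-\<beta>*x*real N) * Z_MC J x \<rho> N) \<and>
     set_integrable lborel {-\<rho>*J/2<..<0} (\<lambda>x. exp (-\<beta>*x*real N) * Z_MC J x \<rho> N * \<bar>x - \<epsilon>\<bar>) \<and>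
     0 < (LINT x:{-\<rho>*J/2<..<0}|lborel. exp (-\<beta>*x*real N) * Z_MC J x \<rho> N) \<and>
     (LINT x:{-\<rho>*J/2<..<0}|lborel. exp (-\<beta>*x*real N) * Z_MC J x \<rho> N * \<bar>x - \<epsilon>\<bar>)
       / (LINT x:{-\<rho>*J/2<..<0}|lborel. exp (-\<beta>*x*real N) * Z_MC J x \<rho> N) \<le> C / sqrt (real N)"
proof -
  define a where "a = -\<rho>*J/2"
  define S where "S = {a<..<0}"
  define t0 where "t0 = \<rho> + 2*\<epsilon>/J"
  define R where "R = \<rho> / t0"
  define K0 where "K0 = (2/(J*t0))\<^sup>2 / (2*R)"
  define c3 where "c3 = 1 / sqrt (-\<epsilon>/J)"
  define c6 where "c6 = 2 / (-\<epsilon>)"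
  define Q where "Q = J * sqrt (-2*a/J)"
  define C where "C = exp (5/2) * sqrt \<rho> * (c3 + c6 * Q) * 8 / (K0 * J * t0)"
  have a0: "a < 0" using \<rho> J by (simp add: a_def)
  have t0p: "t0 > 0"
  proof -
    have "-\<rho>*J < 2*\<epsilon>" using ea by simp
    then have "-\<rho> < 2*\<epsilon>/J" using J by (simp add: field_simps)
    then show ?thesis by (simp add: t0_def)
  qed
  have Rp: "R > 0" using \<rho> t0p by (simp add: R_def)
  have K0p: "K0 > 0" using J t0p Rp by (simp add: K0_def)
  have ej: "-\<epsilon>/J > 0" using e0 J divide_pos_pos[of "-\<epsilon>" J] by simp
  have c3p: "c3 > 0" using ej by (simp add: c3_def)
  have c6p: "c6 > 0" using e0 by (simp add: c6_def)
  have Qp: "Q \<ge> 0" using J a0 divide_pos_pos[of "-2*a" J] by (simp add: Q_def)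
  have vI: "set_integrable lborel S (\<lambda>x. 1 / sqrt (-2*x/J))"
    and vV: "(LINT x:S|lborel. 1 / sqrt (-2*x/J)) = Q"
    using int_inv_sqrt[OF a0 J] by (simp_all add: S_def Q_def)
  show ?thesis
  proof (intro exI[of _ C] allI impI)
    fix N :: nat assume N: "N \<ge> 6"
    define W where "W x = exp (-\<beta>*x*real N) * Z_MC J x \<rho> N" for x
    define Mh where "Mh = (real N - 3)/2"
    define q where "q = Mh * (2/(J*t0))\<^sup>2 / (2*R)"
    define E where "E = exp (-\<beta>*\<epsilon>*real N + Mh * ln t0)"
    define \<delta> where "\<delta> = J*t0/(2 * sqrt (real N))"
    note pw = case_neg_pw[OF J \<rho> ea e0 beta N, folded t0_def, folded R_def Mh_def, folded q_def E_def \<delta>_def]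
    have up: "W x \<le> E * exp (3/2) * exp (-q*(x-\<epsilon>)\<^sup>2) / sqrt (-2*x/J)" if "x \<in> S" for x
      using pw(1)[of x] that by (simp add: W_def S_def a_def)
    have low: "x \<in> S \<and> E * exp (-1) / sqrt \<rho> \<le> W x" if "x \<in> {\<epsilon>-\<delta><..<\<epsilon>}" for x
      using pw(2)[OF that] by (simp add: W_def S_def a_def)
    have Mh4: "Mh \<ge> real N / 4" using N by (simp add: Mh_def)
    have Np: "real N > 0" using N by simp
    have qK: "q = Mh * K0" by (simp add: q_def K0_def)
    have Mhp: "Mh > 0" using Mh4 Np by linarith
    have qp: "q > 0" unfolding qK using Mhp K0p by simp
    have E0: "E > 0" by (simp add: E_def)
    have \<delta>p: "\<delta> > 0" using J t0p Np by (simp add: \<delta>_def)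
    have W0: "0 \<le> W x" if "x \<in> S" for x
    proof -
      have "-2*x/J > 0" using S_facts[OF J that[unfolded S_def a_def]] by simp
      then show ?thesis by (simp add: W_def Z_MC_def)
    qed
    have Sb: "S \<in> sets borel" by (simp add: S_def)
    have Wc: "continuous_on S W" unfolding W_def S_def a_def by (rule W_cont[OF J])
    have Wm: "set_borel_measurable lborel S W"
      using borel_measurable_continuous_on_indicator[OF Sb Wc] by (simp add: set_borel_measurable_def)
    have v0: "0 < sqrt (-2*x/J)" if "x \<in> S" for x
      using S_facts[OF J that[unfolded S_def a_def]] by simp
    have Wi: "set_integrable lborel S W"
    proof (rule set_integrable_bound[OF _ Wm])
      show "set_integrable lborel S (\<lambda>x. E * exp (3/2) * (1 / sqrt (-2*x/J)))"
        by (rule set_integrable_mult_right[OF vI])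
      show "AE x in lborel. x \<in> S \<longrightarrow> norm (W x) \<le> norm (E * exp (3/2) * (1 / sqrt (-2*x/J)))"
      proof (intro AE_I2 impI)
        fix x assume x: "x \<in> S"
        have "W x \<le> E * exp (3/2) * exp (-q*(x-\<epsilon>)\<^sup>2) / sqrt (-2*x/J)" by (rule up[OF x])
        also have "\<dots> \<le> E * exp (3/2) * 1 / sqrt (-2*x/J)"
          using qp E0 v0[OF x] by (intro divide_right_mono mult_left_mono) auto
        finally show "norm (W x) \<le> norm (E * exp (3/2) * (1 / sqrt (-2*x/J)))"
          using W0[OF x] E0 v0[OF x] by simp
      qed
    qed
    define h where "h x = exp (- q * (x - \<epsilon>)\<^sup>2) * \<bar>x - \<epsilon>\<bar>" for x
    have hI: "set_integrable lborel S h" and hV: "(LINT x:S|lborel. h x) \<le> 1 / q"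
      using int_gauss_abs[of a \<epsilon> 0 q] ea e0 qp unfolding h_def[abs_def] by (simp_all add: S_def a_def)
    define Bf where "Bf x = E * exp (3/2) * (c3 * h x + (c6 / q) * (1 / sqrt (-2*x/J)))" for x
    have BfI: "set_integrable lborel S Bf"
      unfolding Bf_def using hI vI by (intro set_integrable_mult_right set_integral_add) auto
    have BfV: "(LINT x:S|lborel. Bf x) = E * exp (3/2) * (c3 * (LINT x:S|lborel. h x) + (c6 / q) * Q)"
    proof -
      have i1: "set_integrable lborel S (\<lambda>x. c3 * h x)" using hI by (rule set_integrable_mult_right)
      have i2: "set_integrable lborel S (\<lambda>x. (c6 / q) * (1 / sqrt (-2*x/J)))" using vI by (rule set_integrable_mult_right)
      have "(LINT x:S|lborel. Bf x) = E * exp (3/2) * (LINT x:S|lborel. c3 * h x + (c6 / q) * (1 / sqrt (-2*x/J)))"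
        unfolding Bf_def by (rule set_integral_mult_right)
      also have "(LINT x:S|lborel. c3 * h x + (c6 / q) * (1 / sqrt (-2*x/J)))
          = (LINT x:S|lborel. c3 * h x) + (LINT x:S|lborel. (c6 / q) * (1 / sqrt (-2*x/J)))"
        by (rule set_integral_add(2)[OF i1 i2])
      also have "(LINT x:S|lborel. c3 * h x) = c3 * (LINT x:S|lborel. h x)" by (rule set_integral_mult_right)
      also have "(LINT x:S|lborel. (c6 / q) * (1 / sqrt (-2*x/J))) = (c6 / q) * (LINT x:S|lborel. 1 / sqrt (-2*x/J))"
        by (rule set_integral_mult_right)
      finally show ?thesis unfolding vV .
    qed
    have pwB: "W x * \<bar>x - \<epsilon>\<bar> \<le> Bf x" if x: "x \<in> S" for x
    proof -
      have "W x * \<bar>x - \<epsilon>\<bar> \<le> E * exp (3/2) * exp (-q*(x-\<epsilon>)\<^sup>2) / sqrt (-2*x/J) * \<bar>x - \<epsilon>\<bar>"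
        using up[OF x] by (intro mult_right_mono) auto
      also have "\<dots> = E * exp (3/2) * (h x / sqrt (-2*x/J))" by (simp add: h_def)
      also have "h x / sqrt (-2*x/J) \<le> c3 * h x + (c6 / q) * (1 / sqrt (-2*x/J))"
      proof (cases "x \<le> \<epsilon>/2")
        case True
        have "-\<epsilon>/J \<le> -2*x/J" using True J by (simp add: divide_right_mono)
        then have "sqrt (-\<epsilon>/J) \<le> sqrt (-2*x/J)" by (rule real_sqrt_le_mono)
        then have "1 / sqrt (-2*x/J) \<le> c3" unfolding c3_def using ej by (intro divide_left_mono) auto
        then have "h x / sqrt (-2*x/J) \<le> c3 * h x"
          using mult_right_mono[of "1 / sqrt (-2*x/J)" c3 "h x"] by (simp add: h_def)
        moreover have "0 \<le> (c6 / q) * (1 / sqrt (-2*x/J))" using c6p qp v0[OF x] by simp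
        ultimately show ?thesis by simp
      next
        case False
        define d where "d = x - \<epsilon>"
        have dp: "d \<ge> -\<epsilon>/2" using False by (simp add: d_def)
        have dpos: "d > 0" using dp e0 by simp
        have "exp (- (q * d\<^sup>2)) \<le> 1 / (q * d\<^sup>2)" using qp dpos by (intro exp_neg_le_inv) simp
        then have "exp (- (q * d\<^sup>2)) * d \<le> 1 / (q * d\<^sup>2) * d" using dpos by (intro mult_right_mono) auto
        then have "h x \<le> 1 / (q * d\<^sup>2) * d" using dpos by (simp add: h_def d_def[symmetric])
        also have "\<dots> = 1 / (q * d)" using dpos by (simp add: power2_eq_square)
        also have "\<dots> \<le> c6 / q"
        proof -
          have 1: "1 / d \<le> 2 / (-\<epsilon>)" using dp dpos e0 by (simp add: field_simps)
          have "1 / (q * d) = (1 / d) / q" by simp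
          also have "\<dots> \<le> (2 / (-\<epsilon>)) / q" using 1 qp by (intro divide_right_mono) auto
          finally show ?thesis by (simp add: c6_def)
        qed
        finally have hc: "h x \<le> c6 / q" .
        have "h x / sqrt (-2*x/J) \<le> (c6 / q) / sqrt (-2*x/J)"
          using hc v0[OF x] by (intro divide_right_mono) auto
        then have "h x / sqrt (-2*x/J) \<le> (c6 / q) * (1 / sqrt (-2*x/J))" by simp
        moreover have "0 \<le> c3 * h x" using c3p by (simp add: h_def)
        ultimately show ?thesis by simp
      qed
      then have "E * exp (3/2) * (h x / sqrt (-2*x/J)) \<le> Bf x" unfolding Bf_def using E0
        by (intro mult_left_mono) auto
      finally show ?thesis .
    qed
    have WKm: "set_borel_measurable lborel S (\<lambda>x. W x * \<bar>x - \<epsilon>\<bar>)"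
    proof -
      have "(\<lambda>x. indicator S x *\<^sub>R W x * \<bar>x - \<epsilon>\<bar>) \<in> borel_measurable lborel"
        using Wm unfolding set_borel_measurable_def by measurable
      then show ?thesis unfolding set_borel_measurable_def by (simp add: mult.assoc)
    qed
    have WKi: "set_integrable lborel S (\<lambda>x. W x * \<bar>x - \<epsilon>\<bar>)"
    proof (rule set_integrable_bound[OF BfI WKm])
      show "AE x in lborel. x \<in> S \<longrightarrow> norm (W x * \<bar>x - \<epsilon>\<bar>) \<le> norm (Bf x)"
      proof (intro AE_I2 impI)
        fix x assume x: "x \<in> S"
        show "norm (W x * \<bar>x - \<epsilon>\<bar>) \<le> norm (Bf x)" using pwB[OF x] W0[OF x] by simp
      qed
    qed
    have Num: "(LINT x:S|lborel. W x * \<bar>x - \<epsilon>\<bar>) \<le> E * exp (3/2) * (c3 + c6 * Q) / q"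
    proof -
      have "(LINT x:S|lborel. W x * \<bar>x - \<epsilon>\<bar>) \<le> (LINT x:S|lborel. Bf x)"
        by (rule set_integral_mono[OF WKi BfI pwB])
      also have "\<dots> \<le> E * exp (3/2) * (c3 * (1 / q) + (c6 / q) * Q)"
        unfolding BfV using hV c3p E0 by (intro mult_left_mono add_right_mono) auto
      also have "\<dots> = E * exp (3/2) * (c3 + c6 * Q) / q" by (simp add: add_divide_distrib algebra_simps)
      finally show ?thesis .
    qed
    have Num0: "0 \<le> (LINT x:S|lborel. W x * \<bar>x - \<epsilon>\<bar>)"
      unfolding set_lebesgue_integral_def using W0
      by (intro Bochner_Integration.integral_nonneg) (auto simp: indicator_def)
    have Den: "E * exp (-1) / sqrt \<rho> * \<delta> \<le> (LINT x:S|lborel. W x)"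
    proof -
      have "E * exp (-1) / sqrt \<rho> * (\<epsilon> - (\<epsilon> - \<delta>)) \<le> (LINT x:S|lborel. W x)"
        by (rule int_lower[OF Wi W0]) (use \<delta>p low E0 \<rho> in auto)
      then show ?thesis by simp
    qed
    have Dp: "0 < E * exp (-1) / sqrt \<rho> * \<delta>" using E0 \<rho> \<delta>p by simp
    have "(LINT x:S|lborel. W x * \<bar>x - \<epsilon>\<bar>) / (LINT x:S|lborel. W x)
        \<le> (E * exp (3/2) * (c3 + c6 * Q) / q) / (E * exp (-1) / sqrt \<rho> * \<delta>)"
      by (rule frac_le[OF _ Num Dp Den]) (use E0 c3p c6p Qp qp in simp)
    also have "\<dots> = exp (5/2) * sqrt \<rho> * (c3 + c6 * Q) / (q * \<delta>)"
    proof -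
      have "exp (3/2) / exp (-1) = exp (5/2::real)" by (simp add: exp_diff[symmetric])
      then show ?thesis using E0 \<rho> qp \<delta>p by (simp add: field_simps)
    qed
    also have "\<dots> \<le> exp (5/2) * sqrt \<rho> * (c3 + c6 * Q) / (K0 * J * t0 * sqrt (real N) / 8)"
    proof (rule divide_left_mono)
      show "0 \<le> exp (5/2) * sqrt \<rho> * (c3 + c6 * Q)" using c3p c6p Qp \<rho> by (intro mult_nonneg_nonneg add_nonneg_nonneg) auto
      show "0 < (q * \<delta>) * (K0 * J * t0 * sqrt (real N) / 8)" using K0p J t0p Np qp \<delta>p by simp
      have "q * \<delta> = Mh * K0 * J * t0 / (2 * sqrt (real N))" by (simp add: qK \<delta>_def)
      also have "\<dots> \<ge> (real N / 4) * K0 * J * t0 / (2 * sqrt (real N))"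
        using Mh4 K0p J t0p Np by (intro divide_right_mono mult_right_mono) auto
      finally have 1: "q * \<delta> \<ge> real N * (K0 * J * t0) / (8 * sqrt (real N))" by (simp add: field_simps)
      have sp: "sqrt (real N) > 0" using Np by simp
      have "real N * (K0 * J * t0) / (8 * sqrt (real N)) = (sqrt (real N) * sqrt (real N)) * (K0 * J * t0) / (8 * sqrt (real N))"
        by simp
      also have "\<dots> = K0 * J * t0 * sqrt (real N) / 8" using sp by (simp add: field_simps)
      finally show "K0 * J * t0 * sqrt (real N) / 8 \<le> q * \<delta>" using 1 by linarith
    qed
    also have "\<dots> = C / sqrt (real N)" by (simp add: C_def field_simps)
    finally have ratio: "(LINT x:S|lborel. W x * \<bar>x - \<epsilon>\<bar>) / (LINT x:S|lborel. W x) \<le> C / sqrt (real N)" .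
    have D0: "0 < (LINT x:S|lborel. W x)" using Dp Den by linarith
    show "set_integrable lborel {-\<rho>*J/2<..<0} (\<lambda>x. exp (-\<beta>*x*real N) * Z_MC J x \<rho> N) \<and>
     set_integrable lborel {-\<rho>*J/2<..<0} (\<lambda>x. exp (-\<beta>*x*real N) * Z_MC J x \<rho> N * \<bar>x - \<epsilon>\<bar>) \<and>
     0 < (LINT x:{-\<rho>*J/2<..<0}|lborel. exp (-\<beta>*x*real N) * Z_MC J x \<rho> N) \<and>
     (LINT x:{-\<rho>*J/2<..<0}|lborel. exp (-\<beta>*x*real N) * Z_MC J x \<rho> N * \<bar>x - \<epsilon>\<bar>)
       / (LINT x:{-\<rho>*J/2<..<0}|lborel. exp (-\<beta>*x*real N) * Z_MC J x \<rho> N) \<le> C / sqrt (real N)"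
      using Wi WKi D0 ratio unfolding W_def S_def a_def by simp
  qed
qed

lemma case_zero_pw:
  fixes J \<rho> \<beta> :: real and N :: nat
  assumes J: "J > 0" and \<rho>: "\<rho> > 0" and beta: "\<beta> < 1/(\<rho>*J)" and N: "N \<ge> 6"
  defines "Mh \<equiv> (real N - 3)/2"
  defines "E \<equiv> exp (Mh * ln \<rho>)"
  defines "d0 \<equiv> 1/(\<rho>*J) - \<beta>"
  defines "c4 \<equiv> 3 * \<bar>\<beta>\<bar> * \<rho> * J / 2"
  defines "c7 \<equiv> d0 + c4 + 4 / (J\<^sup>2 * \<rho>\<^sup>2)"
  shows "\<And>x. x \<in> {-\<rho>*J/2<..<0} \<Longrightarrow> exp (-\<beta>*x*real N) * (\<rho> + 2*x/J) powr Mh \<le> E * exp c4 * exp ((real N - 3) * d0 * x)"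
    and "\<And>x. real N \<ge> 4/(J*\<rho>) \<Longrightarrow> x \<in> {-1/real N<..<0} \<Longrightarrow> x \<in> {-\<rho>*J/2<..<0} \<and> E * exp (-c7) \<le> exp (-\<beta>*x*real N) * (\<rho> + 2*x/J) powr Mh"
proof -
  have Mh0: "Mh \<ge> 0" using N by (simp add: Mh_def)
  have NM: "real N = 2 * Mh + 3" by (simp add: Mh_def field_simps)
  have key: "exp (-\<beta>*x*real N) * (\<rho> + 2*x/J) powr Mh
      = E * exp ((real N - 3) * d0 * x - 3*\<beta>*x + Mh * (ln (1 + 2*x/(J*\<rho>)) - 2*x/(J*\<rho>)))"
    if x: "x \<in> {-\<rho>*J/2<..<0}" for x
  proof -
    have tp: "\<rho> + 2*x/J > 0" using S_facts[OF J x] by simp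
    have ty: "\<rho> + 2*x/J = \<rho> * (1 + 2*x/(J*\<rho>))" using \<rho> J by (simp add: field_simps)
    have y1: "1 + 2*x/(J*\<rho>) > 0" using tp ty \<rho> by (simp add: zero_less_mult_iff)
    have lnt: "ln (\<rho> + 2*x/J) = ln \<rho> + ln (1 + 2*x/(J*\<rho>))" unfolding ty using \<rho> y1 by (simp add: ln_mult)
    have ex: "-\<beta>*x*real N + Mh * ln (\<rho> + 2*x/J)
        = Mh * ln \<rho> + ((real N - 3) * d0 * x - 3*\<beta>*x + Mh * (ln (1 + 2*x/(J*\<rho>)) - 2*x/(J*\<rho>)))"
    proof -
      have "Mh * (2*x/(J*\<rho>)) = (real N - 3) * x / (\<rho>*J)" using J \<rho> by (simp add: Mh_def field_simps)
      then show ?thesis unfolding lnt d0_def using \<rho> J by (simp add: algebra_simps diff_divide_distrib)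
    qed
    have "exp (-\<beta>*x*real N) * (\<rho> + 2*x/J) powr Mh = exp (-\<beta>*x*real N + Mh * ln (\<rho> + 2*x/J))"
      using tp by (simp add: powr_def exp_add[symmetric])
    also have "\<dots> = E * exp ((real N - 3) * d0 * x - 3*\<beta>*x + Mh * (ln (1 + 2*x/(J*\<rho>)) - 2*x/(J*\<rho>)))"
      unfolding ex E_def by (simp add: exp_add)
    finally show ?thesis .
  qed
  have bx: "- 3*\<beta>*x \<le> c4" "- 3*\<beta>*x \<ge> - c4" if x: "x \<in> {-\<rho>*J/2<..<0}" for x
  proof -
    have ax: "\<bar>x\<bar> \<le> \<rho>*J/2" using x by auto
    have "\<bar>3*\<beta>*x\<bar> = 3 * \<bar>\<beta>\<bar> * \<bar>x\<bar>" by (simp add: abs_mult)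
    also have "\<dots> \<le> 3 * \<bar>\<beta>\<bar> * (\<rho>*J/2)" using ax by (intro mult_left_mono) auto
    finally have "\<bar>3*\<beta>*x\<bar> \<le> c4" by (simp add: c4_def)
    then show "- 3*\<beta>*x \<le> c4" "- 3*\<beta>*x \<ge> - c4" by (simp_all add: abs_le_iff)
  qed
  show "exp (-\<beta>*x*real N) * (\<rho> + 2*x/J) powr Mh \<le> E * exp c4 * exp ((real N - 3) * d0 * x)"
    if x: "x \<in> {-\<rho>*J/2<..<0}" for x
  proof -
    have tp: "\<rho> + 2*x/J > 0" using S_facts[OF J x] by simp
    have ty: "\<rho> + 2*x/J = \<rho> * (1 + 2*x/(J*\<rho>))" using \<rho> J by (simp add: field_simps)
    have y1: "1 + 2*x/(J*\<rho>) > 0" using tp ty \<rho> by (simp add: zero_less_mult_iff)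
    have "ln (1 + 2*x/(J*\<rho>)) \<le> 2*x/(J*\<rho>)" using ln_le_minus_one[OF y1] by simp
    then have "Mh * (ln (1 + 2*x/(J*\<rho>)) - 2*x/(J*\<rho>)) \<le> 0" using Mh0 by (simp add: mult_nonneg_nonpos)
    then have "(real N - 3) * d0 * x - 3*\<beta>*x + Mh * (ln (1 + 2*x/(J*\<rho>)) - 2*x/(J*\<rho>)) \<le> c4 + (real N - 3) * d0 * x"
      using bx(1)[OF x] by linarith
    then have "exp ((real N - 3) * d0 * x - 3*\<beta>*x + Mh * (ln (1 + 2*x/(J*\<rho>)) - 2*x/(J*\<rho>))) \<le> exp c4 * exp ((real N - 3) * d0 * x)"
      by (simp add: exp_add[symmetric])
    then show ?thesis unfolding key[OF x] using E_def by (simp add: mult.assoc)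
  qed
  show "x \<in> {-\<rho>*J/2<..<0} \<and> E * exp (-c7) \<le> exp (-\<beta>*x*real N) * (\<rho> + 2*x/J) powr Mh"
    if NJ: "real N \<ge> 4/(J*\<rho>)" and x: "x \<in> {-1/real N<..<0}" for x
  proof -
    have Np: "real N > 0" using N by simp
    have x1: "-1/real N < x" "x < 0" using x by auto
    have ax: "\<bar>x\<bar> \<le> 1/real N" using x1 by simp
    have iN: "1/real N \<le> \<rho>*J/4" using NJ Np J \<rho> by (simp add: field_simps)
    have xS: "x \<in> {-\<rho>*J/2<..<0}"
    proof -
      have pj: "\<rho>*J > 0" using J \<rho> by simp
      have "1/real N < \<rho>*J/2" using iN pj by linarith
      moreover have "-\<rho>*J/2 = -(\<rho>*J/2)" by simp
      ultimately have "-\<rho>*J/2 < -1/real N" by linarith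
      then show ?thesis using x1 by simp
    qed
    define y where "y = 2*x/(J*\<rho>)"
    have ay: "\<bar>y\<bar> \<le> 2/(real N*J*\<rho>)"
    proof -
      have "\<bar>y\<bar> = 2*\<bar>x\<bar>/(J*\<rho>)" using J \<rho> by (simp add: y_def abs_mult)
      also have "\<dots> \<le> 2*(1/real N)/(J*\<rho>)" using ax J \<rho> by (intro divide_right_mono mult_left_mono) auto
      finally show ?thesis by simp
    qed
    have yh: "\<bar>y\<bar> \<le> 1/2"
    proof -
      have "2/(real N*J*\<rho>) \<le> 1/2" using NJ Np J \<rho> by (simp add: field_simps)
      then show ?thesis using ay by simp
    qed
    have ll: "ln (1 + y) - y \<ge> - 2 * y\<^sup>2" by (rule ln_lower[OF yh])
    have y2: "Mh * (2 * y\<^sup>2) \<le> 4 / (J\<^sup>2 * \<rho>\<^sup>2)"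
    proof -
      have "y\<^sup>2 \<le> (2/(real N*J*\<rho>))\<^sup>2" using ay by (metis abs_ge_zero power2_abs power_mono)
      then have "Mh * (2 * y\<^sup>2) \<le> Mh * (2 * (2/(real N*J*\<rho>))\<^sup>2)" using Mh0 by (intro mult_left_mono) auto
      also have "\<dots> = (real N - 3) / real N * (4 / (real N * J\<^sup>2 * \<rho>\<^sup>2))"
        using Np J \<rho> by (simp add: Mh_def power2_eq_square field_simps)
      also have "\<dots> \<le> 1 * (4 / (1 * J\<^sup>2 * \<rho>\<^sup>2))"
        using Np J \<rho> N by (intro mult_mono divide_left_mono) (auto simp: field_simps)
      finally show ?thesis by simp
    qed
    have d0p: "d0 > 0" using beta by (simp add: d0_def)
    have dx: "(real N - 3) * d0 * x \<ge> - d0"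
    proof -
      have "(real N - 3) * \<bar>x\<bar> \<le> real N * (1/real N)" using ax N by (intro mult_mono) auto
      then have "(real N - 3) * \<bar>x\<bar> \<le> 1" using Np by simp
      then have "d0 * ((real N - 3) * \<bar>x\<bar>) \<le> d0" using d0p by (simp add: mult_le_cancel_left1)
      then show ?thesis using x1 N by (simp add: abs_if algebra_simps)
    qed
    have "(real N - 3) * d0 * x - 3*\<beta>*x + Mh * (ln (1 + y) - y) \<ge> - c7"
    proof -
      have "Mh * (ln (1 + y) - y) \<ge> Mh * (- 2 * y\<^sup>2)" using ll Mh0 by (rule mult_left_mono)
      then show ?thesis using y2 dx bx(2)[OF xS] by (simp add: c7_def algebra_simps)
    qed
    then have "exp (-c7) \<le> exp ((real N - 3) * d0 * x - 3*\<beta>*x + Mh * (ln (1 + y) - y))" by simp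
    then have "E * exp (-c7) \<le> E * exp ((real N - 3) * d0 * x - 3*\<beta>*x + Mh * (ln (1 + y) - y))"
      by (simp add: E_def)
    then show ?thesis using key[OF xS] xS by (simp add: y_def)
  qed
qed


lemma case_zero:
  fixes J \<rho> \<beta> :: real
  assumes J: "J > 0" and \<rho>: "\<rho> > 0" and beta: "\<beta> < 1/(\<rho>*J)"
  shows "\<exists>C N0. \<forall>N\<ge>N0.
     set_integrable lborel {-\<rho>*J/2<..<0} (\<lambda>x. exp (-\<beta>*x*real N) * Z_MC J x \<rho> N) \<and>
     set_integrable lborel {-\<rho>*J/2<..<0} (\<lambda>x. exp (-\<beta>*x*real N) * Z_MC J x \<rho> N * sqrt (-2*x/J)) \<and>
     0 < (LINT x:{-\<rho>*J/2<..<0}|lborel. exp (-\<beta>*x*real N) * Z_MC J x \<rho> N) \<and>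
     (LINT x:{-\<rho>*J/2<..<0}|lborel. exp (-\<beta>*x*real N) * Z_MC J x \<rho> N * sqrt (-2*x/J))
       / (LINT x:{-\<rho>*J/2<..<0}|lborel. exp (-\<beta>*x*real N) * Z_MC J x \<rho> N) \<le> C / sqrt (real N)"
proof -
  define a where "a = -\<rho>*J/2"
  define S where "S = {a<..<0}"
  define d0 where "d0 = 1/(\<rho>*J) - \<beta>"
  define c4 where "c4 = 3 * \<bar>\<beta>\<bar> * \<rho> * J / 2"
  define c7 where "c7 = d0 + c4 + 4 / (J\<^sup>2 * \<rho>\<^sup>2)"
  define C where "C = 2 * exp (c4 + c7) * sqrt (2/J) / d0"
  define N0 where "N0 = max 6 (nat \<lceil>4/(J*\<rho>)\<rceil>)"
  have a0: "a < 0" using \<rho> J by (simp add: a_def)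
  have d0p: "d0 > 0" using beta by (simp add: d0_def)
  have vI: "set_integrable lborel S (\<lambda>x. 1 / sqrt (-2*x/J))"
    using int_inv_sqrt[OF a0 J] by (simp_all add: S_def)
  show ?thesis
  proof (intro exI[of _ C] exI[of _ N0] allI impI)
    fix N :: nat assume NN0: "N \<ge> N0"
    have N: "N \<ge> 6" using NN0 by (simp add: N0_def)
    have NJ: "real N \<ge> 4/(J*\<rho>)"
    proof -
      have "nat \<lceil>4/(J*\<rho>)\<rceil> \<le> N" using NN0 by (simp add: N0_def)
      then have "real_of_int \<lceil>4/(J*\<rho>)\<rceil> \<le> real N" by linarith
      then show ?thesis by linarith
    qed
    have Np: "real N > 0" using N by simp
    define W where "W x = exp (-\<beta>*x*real N) * Z_MC J x \<rho> N" for x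
    define Mh where "Mh = (real N - 3)/2"
    define E where "E = exp (Mh * ln \<rho>)"
    define k where "k = (real N - 3) * d0"
    define P where "P x = exp (-\<beta>*x*real N) * (\<rho> + 2*x/J) powr Mh" for x
    note pw = case_zero_pw[OF J \<rho> beta N, folded Mh_def, folded E_def d0_def c4_def, folded c7_def]
    have E0: "E > 0" by (simp add: E_def)
    have kp: "k > 0" using N d0p by (simp add: k_def)
    have v0: "0 < sqrt (-2*x/J)" if "x \<in> S" for x
      using S_facts[OF J that[unfolded S_def a_def]] by simp
    have WP2: "W x = P x / sqrt (-2*x/J)" if "x \<in> S" for x
      by (simp add: W_def P_def Z_MC_def Mh_def)
    have WP: "W x * sqrt (-2*x/J) = P x" if "x \<in> S" for x
    proof -
      have "x < 0" using that by (simp add: S_def)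
      then show ?thesis using WP2[OF that] J by simp
    qed
    have P0: "0 \<le> P x" for x by (simp add: P_def)
    have up: "P x \<le> E * exp c4 * exp (k * x)" if "x \<in> S" for x
      using pw(1)[of x] that by (simp add: P_def S_def a_def k_def mult.assoc)
    have W0: "0 \<le> W x" if "x \<in> S" for x using WP2[OF that] v0[OF that] P0 by simp
    have Sb: "S \<in> sets borel" by (simp add: S_def)
    have Wc: "continuous_on S W" unfolding W_def S_def a_def by (rule W_cont[OF J])
    have Wm: "set_borel_measurable lborel S W"
      using borel_measurable_continuous_on_indicator[OF Sb Wc] by (simp add: set_borel_measurable_def)
    have Wi: "set_integrable lborel S W"
    proof (rule set_integrable_bound[OF _ Wm])
      show "set_integrable lborel S (\<lambda>x. E * exp c4 * (1 / sqrt (-2*x/J)))"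
        by (rule set_integrable_mult_right[OF vI])
      show "AE x in lborel. x \<in> S \<longrightarrow> norm (W x) \<le> norm (E * exp c4 * (1 / sqrt (-2*x/J)))"
      proof (intro AE_I2 impI)
        fix x assume x: "x \<in> S"
        have xn: "x < 0" using x by (simp add: S_def)
        have "exp (k * x) \<le> 1" using mult_pos_neg[OF kp xn] by simp
        then have "P x \<le> E * exp c4" using up[OF x] E0
          by (metis mult_left_mono exp_gt_zero less_eq_real_def mult_pos_pos order_trans mult.right_neutral)
        then have "W x \<le> E * exp c4 / sqrt (-2*x/J)" unfolding WP2[OF x] using v0[OF x] by (intro divide_right_mono) auto
        then show "norm (W x) \<le> norm (E * exp c4 * (1 / sqrt (-2*x/J)))"
          using W0[OF x] E0 v0[OF x] by simp
      qed
    qed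
    have eI: "set_integrable lborel S (\<lambda>x. exp (k * x))" and eV: "(LINT x:S|lborel. exp (k * x)) \<le> 1 / k"
      using int_exp[of a k] a0 kp by (simp_all add: S_def)
    have WKm: "set_borel_measurable lborel S (\<lambda>x. W x * sqrt (-2*x/J))"
    proof -
      have "(\<lambda>x. indicator S x *\<^sub>R W x * sqrt (-2*x/J)) \<in> borel_measurable lborel"
        using Wm unfolding set_borel_measurable_def by measurable
      then show ?thesis unfolding set_borel_measurable_def by (simp add: mult.assoc)
    qed
    have BI: "set_integrable lborel S (\<lambda>x. E * exp c4 * exp (k * x))"
      by (rule set_integrable_mult_right[OF eI])
    have pwB: "W x * sqrt (-2*x/J) \<le> E * exp c4 * exp (k * x)" if x: "x \<in> S" for x
      using WP[OF x] up[OF x] by simp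
    have WKi: "set_integrable lborel S (\<lambda>x. W x * sqrt (-2*x/J))"
    proof (rule set_integrable_bound[OF BI WKm])
      show "AE x in lborel. x \<in> S \<longrightarrow> norm (W x * sqrt (-2*x/J)) \<le> norm (E * exp c4 * exp (k * x))"
      proof (intro AE_I2 impI)
        fix x assume x: "x \<in> S"
        show "norm (W x * sqrt (-2*x/J)) \<le> norm (E * exp c4 * exp (k * x))"
          using pwB[OF x] W0[OF x] v0[OF x] by simp
      qed
    qed
    have Num: "(LINT x:S|lborel. W x * sqrt (-2*x/J)) \<le> E * exp c4 / k"
    proof -
      have "(LINT x:S|lborel. W x * sqrt (-2*x/J)) \<le> (LINT x:S|lborel. E * exp c4 * exp (k * x))"
        by (rule set_integral_mono[OF WKi BI pwB])
      also have "\<dots> = E * exp c4 * (LINT x:S|lborel. exp (k * x))" by (rule set_integral_mult_right)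
      also have "\<dots> \<le> E * exp c4 * (1 / k)" using eV E0 by (intro mult_left_mono) auto
      finally show ?thesis by simp
    qed
    define L where "L = E * exp (-c7) / sqrt (2/(real N * J))"
    have Lp: "L > 0" using E0 J Np by (simp add: L_def)
    have low: "L \<le> W x" if x: "x \<in> {-1/real N<..<0}" for x
    proof -
      have xS: "x \<in> S" and PL: "E * exp (-c7) \<le> P x"
        using pw(2)[OF NJ x] by (auto simp: P_def S_def a_def)
      have "-2*x/J \<le> 2/(real N * J)"
      proof -
        have "-x \<le> 1/real N" using x by simp
        then have "-2*x \<le> 2/real N" by simp
        then show ?thesis using J by (simp add: field_simps)
      qed
      then have s: "sqrt (-2*x/J) \<le> sqrt (2/(real N * J))" by (rule real_sqrt_le_mono)
      have "L \<le> E * exp (-c7) / sqrt (-2*x/J)"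
        unfolding L_def using s v0[OF xS] E0 Np J by (intro divide_left_mono mult_pos_pos) auto
      also have "\<dots> \<le> P x / sqrt (-2*x/J)" using PL v0[OF xS] by (intro divide_right_mono) auto
      finally show ?thesis using WP2[OF xS] by simp
    qed
    have Den: "L * (0 - (-1/real N)) \<le> (LINT x:S|lborel. W x)"
    proof (rule int_lower[OF Wi W0])
      show "-1/real N \<le> 0" by simp
      show "{-1/real N<..<0} \<subseteq> S" using pw(2)[OF NJ] by (auto simp: S_def a_def)
      show "\<And>x. x \<in> {-1/real N<..<0} \<Longrightarrow> L \<le> W x" by (rule low)
      show "0 \<le> L" using Lp by simp
    qed
    have Dp: "0 < L * (0 - (-1/real N))" using Lp Np by simp
    have "(LINT x:S|lborel. W x * sqrt (-2*x/J)) / (LINT x:S|lborel. W x)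
        \<le> (E * exp c4 / k) / (L * (0 - (-1/real N)))"
      by (rule frac_le[OF _ Num Dp Den]) (use E0 kp in simp)
    also have "\<dots> = exp (c4 + c7) * sqrt (2/(real N * J)) * real N / k"
      using E0 kp Np J by (simp add: L_def exp_add exp_minus field_simps)
    also have "\<dots> \<le> C / sqrt (real N)"
    proof -
      define s where "s = sqrt (real N)"
      have sp: "s > 0" using Np by (simp add: s_def)
      have ss: "real N = s * s" using Np by (simp add: s_def)
      have sq: "sqrt (2/(real N * J)) = sqrt (2/J) / s"
        by (simp add: s_def real_sqrt_divide real_sqrt_mult field_simps)
      have kk: "k \<ge> s * s * d0 / 2" using N d0p ss by (simp add: k_def field_simps)
      have "exp (c4 + c7) * sqrt (2/(real N * J)) * real N / k = exp (c4 + c7) * sqrt (2/J) * s / k"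
        unfolding sq using sp by (simp add: ss field_simps)
      also have "\<dots> \<le> exp (c4 + c7) * sqrt (2/J) * s / (s * s * d0 / 2)"
        using kk sp d0p J kp by (intro divide_left_mono mult_pos_pos) auto
      also have "\<dots> = C / s" using sp d0p by (simp add: C_def field_simps)
      finally show ?thesis by (simp add: s_def)
    qed
    finally have ratio: "(LINT x:S|lborel. W x * sqrt (-2*x/J)) / (LINT x:S|lborel. W x) \<le> C / sqrt (real N)" .
    have D0: "0 < (LINT x:S|lborel. W x)" using Dp Den by linarith
    show "set_integrable lborel {-\<rho>*J/2<..<0} (\<lambda>x. exp (-\<beta>*x*real N) * Z_MC J x \<rho> N) \<and>
     set_integrable lborel {-\<rho>*J/2<..<0} (\<lambda>x. exp (-\<beta>*x*real N) * Z_MC J x \<rho> N * sqrt (-2*x/J)) \<and>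
     0 < (LINT x:{-\<rho>*J/2<..<0}|lborel. exp (-\<beta>*x*real N) * Z_MC J x \<rho> N) \<and>
     (LINT x:{-\<rho>*J/2<..<0}|lborel. exp (-\<beta>*x*real N) * Z_MC J x \<rho> N * sqrt (-2*x/J))
       / (LINT x:{-\<rho>*J/2<..<0}|lborel. exp (-\<beta>*x*real N) * Z_MC J x \<rho> N) \<le> C / sqrt (real N)"
      using Wi WKi D0 ratio unfolding W_def S_def a_def by simp
  qed
qed

lemma MC_bnd:
  fixes f :: "(nat \<Rightarrow> real) \<Rightarrow> real"
  assumes N: "N \<ge> 1" and fin: "finite I"
    and Lip: "\<forall>x y. \<bar>f x - f y\<bar> \<le> sqrt (\<Sum>i\<in>I. (x i - y i)\<^sup>2)"
    and IN: "I \<subseteq> {..<N}" and bnd: "\<forall>x. \<bar>f x\<bar> \<le> B"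
  shows "\<bar>MC_m_expect m \<rho> N (f \<circ> P_I I)\<bar> \<le> B"
proof -
  interpret prob_space "PP N" by (rule PP_prob[OF N])
  have gm: "(f \<circ> P_I I) \<in> borel_measurable (Pi\<^sub>M {..<N} (\<lambda>_. borel))" by (rule g_meas[OF fin Lip IN])
  have "\<bar>MC_m_expect m \<rho> N (f \<circ> P_I I)\<bar> = \<bar>\<integral>x. (f \<circ> P_I I) (to_sphere m \<rho> N x) \<partial>PP N\<bar>"
    using MC_m_expect_eq[OF gm] by simp
  also have "\<dots> \<le> (\<integral>x. \<bar>(f \<circ> P_I I) (to_sphere m \<rho> N x)\<bar> \<partial>PP N)"
    using integral_norm_bound[of "PP N" "\<lambda>x. (f \<circ> P_I I) (to_sphere m \<rho> N x)"] by simp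
  also have "\<dots> \<le> (\<integral>x. B \<partial>PP N)"
  proof (rule integral_mono)
    have tsm: "to_sphere m \<rho> N \<in> measurable (PP N) (Pi\<^sub>M {..<N} (\<lambda>_. borel))"
      using to_sphere_meas measurable_cong_sets[of "PP N" "Leb_N N" "Pi\<^sub>M {..<N} (\<lambda>_. borel)" "Pi\<^sub>M {..<N} (\<lambda>_. borel)"]
      by (simp add: PP_def)
    have Gm: "(\<lambda>x. (f \<circ> P_I I) (to_sphere m \<rho> N x)) \<in> borel_measurable (PP N)"
      using measurable_comp[OF tsm gm] by (simp add: comp_def)
    have "integrable (PP N) (\<lambda>x. (f \<circ> P_I I) (to_sphere m \<rho> N x))"
      by (rule integrable_const_bound[where B=B]) (use Gm bnd in auto)
    then show "integrable (PP N) (\<lambda>x. \<bar>(f \<circ> P_I I) (to_sphere m \<rho> N x)\<bar>)" by simp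
    show "integrable (PP N) (\<lambda>x. B)" by simp
    show "\<And>x. \<bar>(f \<circ> P_I I) (to_sphere m \<rho> N x)\<bar> \<le> B" using bnd by simp
  qed
  also have "\<dots> = B" by (simp add: prob_space)
  finally show ?thesis .
qed

lemma sqrt_diff_le1:
  fixes a b :: real assumes a: "a > 0" and b: "b \<ge> 0"
  shows "\<bar>sqrt a - sqrt b\<bar> \<le> \<bar>a - b\<bar> / sqrt a"
proof -
  have sa: "sqrt a > 0" using a by simp
  have sb: "sqrt b \<ge> 0" using b by simp
  have "(sqrt a - sqrt b) * (sqrt a + sqrt b) = a - b" using a b by (simp add: algebra_simps)
  then have "\<bar>sqrt a - sqrt b\<bar> * (sqrt a + sqrt b) = \<bar>a - b\<bar>"
    using sa sb by (metis abs_mult abs_of_nonneg add_nonneg_nonneg less_imp_le)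
  moreover have "\<bar>sqrt a - sqrt b\<bar> * sqrt a \<le> \<bar>sqrt a - sqrt b\<bar> * (sqrt a + sqrt b)"
    using sb by (intro mult_left_mono) auto
  ultimately have "\<bar>sqrt a - sqrt b\<bar> * sqrt a \<le> \<bar>a - b\<bar>" by simp
  then show ?thesis using sa by (simp add: field_simps)
qed

lemma sqrt_diff_le2:
  fixes a b :: real assumes b: "0 \<le> b" and ba: "b \<le> a"
  shows "\<bar>sqrt a - sqrt b\<bar> \<le> sqrt (a - b)"
proof -
  have "sqrt a = sqrt (b + (a - b))" by simp
  also have "\<dots> \<le> sqrt b + sqrt (a - b)" using b ba by (intro sqrt_add_le_add_sqrt) auto
  finally have "sqrt a - sqrt b \<le> sqrt (a - b)" by simp
  moreover have "sqrt b \<le> sqrt a" using ba by simp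
  ultimately show ?thesis by simp
qed

lemma G_diff:
  fixes f :: "(nat \<Rightarrow> real) \<Rightarrow> real"
  assumes N: "N \<ge> 1" and fin: "finite I"
    and Lip: "\<forall>x y. \<bar>f x - f y\<bar> \<le> sqrt (\<Sum>i\<in>I. (x i - y i)\<^sup>2)"
    and IN: "I \<subseteq> {..<N}" and bnd: "\<forall>x. \<bar>f x\<bar> \<le> B"
  shows "\<bar>(MC_m_expect u \<rho> N (f \<circ> P_I I) / 2 + MC_m_expect (-u) \<rho> N (f \<circ> P_I I) / 2)
          - (MC_m_expect v \<rho> N (f \<circ> P_I I) / 2 + MC_m_expect (-v) \<rho> N (f \<circ> P_I I) / 2)\<bar>
         \<le> real (card I) * (\<bar>u - v\<bar> + \<bar>sqrt (\<rho> - u\<^sup>2) - sqrt (\<rho> - v\<^sup>2)\<bar>)"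
proof -
  let ?F = "\<lambda>m. MC_m_expect m \<rho> N (f \<circ> P_I I)"
  let ?c = "real (card I) * (\<bar>u - v\<bar> + \<bar>sqrt (\<rho> - u\<^sup>2) - sqrt (\<rho> - v\<^sup>2)\<bar>)"
  have 1: "\<bar>?F u - ?F v\<bar> \<le> ?c" by (rule MC_lip[OF N fin Lip IN bnd])
  have "\<bar>?F (-u) - ?F (-v)\<bar> \<le> real (card I) * (\<bar>-u - -v\<bar> + \<bar>sqrt (\<rho> - (-u)\<^sup>2) - sqrt (\<rho> - (-v)\<^sup>2)\<bar>)"
    by (rule MC_lip[OF N fin Lip IN bnd])
  then have 2: "\<bar>?F (-u) - ?F (-v)\<bar> \<le> ?c" by (simp add: abs_minus_commute)
  have "\<bar>(?F u / 2 + ?F (-u) / 2) - (?F v / 2 + ?F (-v) / 2)\<bar> = \<bar>(?F u - ?F v) / 2 + (?F (-u) - ?F (-v)) / 2\<bar>"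
    by (simp add: diff_divide_distrib algebra_simps)
  also have "\<dots> \<le> \<bar>?F u - ?F v\<bar> / 2 + \<bar>?F (-u) - ?F (-v)\<bar> / 2" by (rule order_trans[OF abs_triangle_ineq]) simp
  also have "\<dots> \<le> ?c / 2 + ?c / 2" using 1 2 by linarith
  finally show ?thesis by simp
qed

lemma MC_expect_S:
  assumes "x < 0"
  shows "MC_expect J x \<rho> N g = MC_m_expect (sqrt (-2*x/J)) \<rho> N g / 2 + MC_m_expect (- sqrt (-2*x/J)) \<rho> N g / 2"
  using assms by (simp add: MC_expect_def)

lemma G_cont:
  fixes f :: "(nat \<Rightarrow> real) \<Rightarrow> real"
  assumes J: "J > 0" and N: "N \<ge> 1" and fin: "finite I"
    and Lip: "\<forall>x y. \<bar>f x - f y\<bar> \<le> sqrt (\<Sum>i\<in>I. (x i - y i)\<^sup>2)"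
    and IN: "I \<subseteq> {..<N}" and bnd: "\<forall>x. \<bar>f x\<bar> \<le> B"
  shows "continuous_on {a<..<0} (\<lambda>x. MC_expect J x \<rho> N (f \<circ> P_I I))"
proof (rule cont_by_bound)
  let ?m = "\<lambda>z. sqrt (-2*z/J)"
  let ?h = "\<lambda>x y. real (card I) * (\<bar>?m y - ?m x\<bar> + \<bar>sqrt (\<rho> - (?m y)\<^sup>2) - sqrt (\<rho> - (?m x)\<^sup>2)\<bar>)"
  fix x y assume x: "x \<in> {a<..<0}" and y: "y \<in> {a<..<0}"
  show "\<bar>MC_expect J y \<rho> N (f \<circ> P_I I) - MC_expect J x \<rho> N (f \<circ> P_I I)\<bar> \<le> ?h x y"
    using G_diff[OF N fin Lip IN bnd, of "?m y" \<rho> "?m x"] x y by (simp add: MC_expect_S)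
next
  let ?m = "\<lambda>z. sqrt (-2*z/J)"
  fix x assume x: "x \<in> {a<..<0}"
  have "((\<lambda>y. real (card I) * (\<bar>?m y - ?m x\<bar> + \<bar>sqrt (\<rho> - (?m y)\<^sup>2) - sqrt (\<rho> - (?m x)\<^sup>2)\<bar>))
        \<longlongrightarrow> real (card I) * (\<bar>?m x - ?m x\<bar> + \<bar>sqrt (\<rho> - (?m x)\<^sup>2) - sqrt (\<rho> - (?m x)\<^sup>2)\<bar>)) (at x within {a<..<0})"
    using J by (intro tendsto_intros) auto
  then show "((\<lambda>y. real (card I) * (\<bar>?m y - ?m x\<bar> + \<bar>sqrt (\<rho> - (?m y)\<^sup>2) - sqrt (\<rho> - (?m x)\<^sup>2)\<bar>))
        \<longlongrightarrow> 0) (at x within {a<..<0})" by simp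
qed

lemma per_N:
  fixes f :: "(nat \<Rightarrow> real) \<Rightarrow> real" and K :: "real \<Rightarrow> real"
  assumes J: "J > 0" and \<rho>: "\<rho> > 0" and N: "N \<ge> 1" and fin: "finite I"
    and Lip: "\<forall>x y. \<bar>f x - f y\<bar> \<le> sqrt (\<Sum>i\<in>I. (x i - y i)\<^sup>2)"
    and IN: "I \<subseteq> {..<N}" and bnd: "\<forall>x. \<bar>f x\<bar> \<le> B"
    and Kb: "\<And>x. x \<in> {-\<rho>*J/2<..<0} \<Longrightarrow> \<bar>c - MC_expect J x \<rho> N (f \<circ> P_I I)\<bar> \<le> K x"
    and Wi: "set_integrable lborel {-\<rho>*J/2<..<0} (\<lambda>x. exp (-\<beta>*x*real N) * Z_MC J x \<rho> N)"
    and WKi: "set_integrable lborel {-\<rho>*J/2<..<0} (\<lambda>x. exp (-\<beta>*x*real N) * Z_MC J x \<rho> N * K x)"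
    and D: "0 < (LINT x:{-\<rho>*J/2<..<0}|lborel. exp (-\<beta>*x*real N) * Z_MC J x \<rho> N)"
  shows "\<bar>c - C_expect J \<beta> \<rho> N (f \<circ> P_I I)\<bar>
     \<le> (LINT x:{-\<rho>*J/2<..<0}|lborel. exp (-\<beta>*x*real N) * Z_MC J x \<rho> N * K x)
        / (LINT x:{-\<rho>*J/2<..<0}|lborel. exp (-\<beta>*x*real N) * Z_MC J x \<rho> N)"
proof -
  let ?S = "{-\<rho>*J/2<..<0}"
  let ?W = "\<lambda>x. exp (-\<beta>*x*real N) * Z_MC J x \<rho> N"
  let ?G = "\<lambda>x. MC_expect J x \<rho> N (f \<circ> P_I I)"
  have a0: "-\<rho>*J/2 \<le> 0" using J \<rho> by simp
  have Ceq: "C_expect J \<beta> \<rho> N (f \<circ> P_I I) = (LINT x:?S|lborel. ?W x * ?G x) / (LINT x:?S|lborel. ?W x)"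
    unfolding C_expect_def using a0 by (simp add: interval_integral_Ioo zero_ereal_def)
  have Sb: "?S \<in> sets borel" by simp
  have Gc: "continuous_on ?S ?G" by (rule G_cont[OF J N fin Lip IN bnd])
  have Gm: "set_borel_measurable lborel ?S ?G"
    using borel_measurable_continuous_on_indicator[OF Sb Gc] by (simp add: set_borel_measurable_def)
  have Gb: "\<bar>?G x\<bar> \<le> B" if "x \<in> ?S" for x
  proof -
    have "x < 0" using that by simp
    then have "\<bar>?G x\<bar> \<le> \<bar>MC_m_expect (sqrt (-2*x/J)) \<rho> N (f \<circ> P_I I)\<bar> / 2 + \<bar>MC_m_expect (- sqrt (-2*x/J)) \<rho> N (f \<circ> P_I I)\<bar> / 2"
      by (simp add: MC_expect_S)
    also have "\<dots> \<le> B / 2 + B / 2"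
      using MC_bnd[OF N fin Lip IN bnd] by (intro add_mono divide_right_mono) auto
    finally show ?thesis by simp
  qed
  have W0: "0 \<le> ?W x" if "x \<in> ?S" for x
  proof -
    have "-2*x/J > 0" using S_facts[OF J that] by simp
    then show ?thesis by (simp add: Z_MC_def)
  qed
  show ?thesis unfolding Ceq
    by (rule ratio_bound[OF _ Wi W0 Gm Gb Kb _ D]) (use WKi in auto)
qed

theorem theorem4p27:
  fixes J \<rho> \<epsilon> :: real and I :: "nat set" and f :: "(nat \<Rightarrow> real) \<Rightarrow> real"
  assumes "J > 0" and "\<rho> > 0"
    and "-J*\<rho>/2 < \<epsilon>" and "\<epsilon> \<le> 0"
    and "finite I"
    and "\<exists>B. \<forall>x. \<bar>f x\<bar> \<le> B"
    and "\<forall>x y. \<bar>f x - f y\<bar> \<le> sqrt (\<Sum>i\<in>I. (x i - y i)\<^sup>2)"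
  shows "(\<epsilon> < 0 \<longrightarrow>
            (\<lambda>N. MC_expect J \<epsilon> \<rho> N (f \<circ> P_I I)
                 - C_expect J ((1/J) / (\<rho> + 2*\<epsilon>/J)) \<rho> N (f \<circ> P_I I))
            \<in> O(\<lambda>N. 1 / sqrt (real N)))
       \<and> (\<epsilon> = 0 \<longrightarrow> (\<forall>\<beta>. \<beta> < 1 / (\<rho>*J) \<longrightarrow>
            (\<lambda>N. MC_expect J 0 \<rho> N (f \<circ> P_I I) - C_expect J \<beta> \<rho> N (f \<circ> P_I I))
            \<in> O(\<lambda>N. 1 / sqrt (real N))))"
proof -
  note J = assms(1) and \<rho> = assms(2) and fin = assms(5) and Lip = assms(7)
  obtain B where bnd: "\<forall>x. \<bar>f x\<bar> \<le> B" using assms(6) by blast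
  obtain N1 where N1: "I \<subseteq> {..<N1}" using fin finite_nat_iff_bounded by blast
  have IN: "I \<subseteq> {..<N}" if "N \<ge> N1" for N using N1 that by auto
  have ea: "-\<rho>*J/2 < \<epsilon>" using assms(3) by (simp add: mult.commute)
  let ?g = "f \<circ> P_I I"
  have part1: "(\<lambda>N. MC_expect J \<epsilon> \<rho> N ?g - C_expect J ((1/J) / (\<rho> + 2*\<epsilon>/J)) \<rho> N ?g)
            \<in> O(\<lambda>N. 1 / sqrt (real N))" if e0: "\<epsilon> < 0"
  proof -
    define \<beta> where "\<beta> = (1/J) / (\<rho> + 2*\<epsilon>/J)"
    obtain C0 where C0: "\<forall>N\<ge>6.
     set_integrable lborel {-\<rho>*J/2<..<0} (\<lambda>x. exp (-\<beta>*x*real N) * Z_MC J x \<rho> N) \<and>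
     set_integrable lborel {-\<rho>*J/2<..<0} (\<lambda>x. exp (-\<beta>*x*real N) * Z_MC J x \<rho> N * \<bar>x - \<epsilon>\<bar>) \<and>
     0 < (LINT x:{-\<rho>*J/2<..<0}|lborel. exp (-\<beta>*x*real N) * Z_MC J x \<rho> N) \<and>
     (LINT x:{-\<rho>*J/2<..<0}|lborel. exp (-\<beta>*x*real N) * Z_MC J x \<rho> N * \<bar>x - \<epsilon>\<bar>)
       / (LINT x:{-\<rho>*J/2<..<0}|lborel. exp (-\<beta>*x*real N) * Z_MC J x \<rho> N) \<le> C0 / sqrt (real N)"
      using case_neg[OF J \<rho> ea e0 \<beta>_def] by blast
    define m0 where "m0 = sqrt (-2*\<epsilon>/J)"
    define t0 where "t0 = \<rho> + 2*\<epsilon>/J"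
    define KC where "KC = real (card I) * (2/J) * (1/m0 + 1/sqrt t0)"
    have ej: "-2*\<epsilon>/J > 0" using e0 J divide_pos_pos[of "-2*\<epsilon>" J] by simp
    have m0p: "m0 > 0" using ej by (simp add: m0_def)
    have t0p: "t0 > 0"
    proof -
      have "-\<rho>*J < 2*\<epsilon>" using ea by simp
      then have "-\<rho> < 2*\<epsilon>/J" using J by (simp add: field_simps)
      then show ?thesis by (simp add: t0_def)
    qed
    have KC0: "KC \<ge> 0" using m0p t0p J by (simp add: KC_def)
    have bound: "\<bar>MC_expect J \<epsilon> \<rho> N ?g - C_expect J \<beta> \<rho> N ?g\<bar> \<le> KC * C0 * (1 / sqrt (real N))"
      if N: "N \<ge> max 6 N1" for N
    proof -
      have N6: "N \<ge> 6" and N1': "N \<ge> 1" using N by auto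
      have INN: "I \<subseteq> {..<N}" using IN N by simp
      note C0N = C0[rule_format, OF N6]
      have Kb: "\<bar>MC_expect J \<epsilon> \<rho> N ?g - MC_expect J x \<rho> N ?g\<bar> \<le> KC * \<bar>x - \<epsilon>\<bar>"
        if x: "x \<in> {-\<rho>*J/2<..<0}" for x
      proof -
        have x0: "x < 0" using x by simp
        have sf: "\<rho> + 2*x/J > 0" "-2*x/J > 0" using S_facts[OF J x] by auto
        let ?mx = "sqrt (-2*x/J)"
        have "\<bar>MC_expect J \<epsilon> \<rho> N ?g - MC_expect J x \<rho> N ?g\<bar>
            \<le> real (card I) * (\<bar>m0 - ?mx\<bar> + \<bar>sqrt (\<rho> - m0\<^sup>2) - sqrt (\<rho> - ?mx\<^sup>2)\<bar>)"
          using G_diff[OF N1' fin Lip INN bnd, of m0 \<rho> ?mx] e0 x0 by (simp add: MC_expect_S m0_def)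
        also have "\<bar>m0 - ?mx\<bar> \<le> (2/J) * \<bar>x - \<epsilon>\<bar> / m0"
        proof -
          have "\<bar>m0 - ?mx\<bar> \<le> \<bar>-2*\<epsilon>/J - -2*x/J\<bar> / sqrt (-2*\<epsilon>/J)"
            unfolding m0_def by (rule sqrt_diff_le1) (use ej sf in auto)
          also have "\<bar>-2*\<epsilon>/J - -2*x/J\<bar> = (2/J) * \<bar>x - \<epsilon>\<bar>"
          proof -
            have "-2*\<epsilon>/J - -2*x/J = (2/J) * (x - \<epsilon>)" using J by (simp add: field_simps)
            moreover have "\<bar>2/J\<bar> = 2/J" using J by simp
            ultimately show ?thesis by (simp only: abs_mult)
          qed
          finally show ?thesis by (simp add: m0_def)
        qed
        also have "\<bar>sqrt (\<rho> - m0\<^sup>2) - sqrt (\<rho> - ?mx\<^sup>2)\<bar> \<le> (2/J) * \<bar>x - \<epsilon>\<bar> / sqrt t0"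
        proof -
          have e1: "\<rho> - m0\<^sup>2 = t0" using ej by (simp add: m0_def t0_def)
          have e2: "\<rho> - ?mx\<^sup>2 = \<rho> + 2*x/J" using sf by simp
          have "\<bar>sqrt t0 - sqrt (\<rho> + 2*x/J)\<bar> \<le> \<bar>t0 - (\<rho> + 2*x/J)\<bar> / sqrt t0"
            by (rule sqrt_diff_le1) (use t0p sf in auto)
          also have "\<bar>t0 - (\<rho> + 2*x/J)\<bar> = (2/J) * \<bar>x - \<epsilon>\<bar>"
          proof -
            have "t0 - (\<rho> + 2*x/J) = (2/J) * (\<epsilon> - x)" using J by (simp add: t0_def field_simps)
            moreover have "\<bar>2/J\<bar> = 2/J" using J by simp
            moreover have "\<bar>\<epsilon> - x\<bar> = \<bar>x - \<epsilon>\<bar>" by (rule abs_minus_commute)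
            ultimately show ?thesis by (simp only: abs_mult)
          qed
          finally show ?thesis unfolding e1 e2 .
        qed
        also have "real (card I) * ((2/J) * \<bar>x - \<epsilon>\<bar> / m0 + (2/J) * \<bar>x - \<epsilon>\<bar> / sqrt t0) = KC * \<bar>x - \<epsilon>\<bar>"
          using J m0p t0p by (simp add: KC_def field_simps)
        finally show ?thesis by (simp add: mult_left_mono)
      qed
      have WKi: "set_integrable lborel {-\<rho>*J/2<..<0} (\<lambda>x. exp (-\<beta>*x*real N) * Z_MC J x \<rho> N * (KC * \<bar>x - \<epsilon>\<bar>))"
        using set_integrable_mult_right[OF C0N[THEN conjunct2, THEN conjunct1], of KC]
        by (simp add: algebra_simps)
      have "\<bar>MC_expect J \<epsilon> \<rho> N ?g - C_expect J \<beta> \<rho> N ?g\<bar>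
         \<le> (LINT x:{-\<rho>*J/2<..<0}|lborel. exp (-\<beta>*x*real N) * Z_MC J x \<rho> N * (KC * \<bar>x - \<epsilon>\<bar>))
           / (LINT x:{-\<rho>*J/2<..<0}|lborel. exp (-\<beta>*x*real N) * Z_MC J x \<rho> N)"
        by (rule per_N[OF J \<rho> N1' fin Lip INN bnd Kb _ WKi]) (use C0N in auto)
      also have "(LINT x:{-\<rho>*J/2<..<0}|lborel. exp (-\<beta>*x*real N) * Z_MC J x \<rho> N * (KC * \<bar>x - \<epsilon>\<bar>))
          = KC * (LINT x:{-\<rho>*J/2<..<0}|lborel. exp (-\<beta>*x*real N) * Z_MC J x \<rho> N * \<bar>x - \<epsilon>\<bar>)"
        by (subst set_integral_mult_right[symmetric]) (simp add: algebra_simps)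
      also have "KC * (LINT x:{-\<rho>*J/2<..<0}|lborel. exp (-\<beta>*x*real N) * Z_MC J x \<rho> N * \<bar>x - \<epsilon>\<bar>)
           / (LINT x:{-\<rho>*J/2<..<0}|lborel. exp (-\<beta>*x*real N) * Z_MC J x \<rho> N)
          = KC * ((LINT x:{-\<rho>*J/2<..<0}|lborel. exp (-\<beta>*x*real N) * Z_MC J x \<rho> N * \<bar>x - \<epsilon>\<bar>)
           / (LINT x:{-\<rho>*J/2<..<0}|lborel. exp (-\<beta>*x*real N) * Z_MC J x \<rho> N))" by simp
      also have "\<dots> \<le> KC * (C0 / sqrt (real N))" using C0N KC0 by (intro mult_left_mono) auto
      finally show ?thesis by (simp add: comp_def)
    qed
    show ?thesis
    proof (rule bigoI[where c="KC * C0"])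
      show "\<forall>\<^sub>F N in at_top. norm (MC_expect J \<epsilon> \<rho> N ?g - C_expect J ((1/J) / (\<rho> + 2*\<epsilon>/J)) \<rho> N ?g)
               \<le> KC * C0 * norm (1 / sqrt (real N))"
        unfolding eventually_at_top_linorder
        using bound by (intro exI[of _ "max 6 N1"]) (simp add: \<beta>_def)
    qed
  qed
  have part2: "(\<lambda>N. MC_expect J 0 \<rho> N ?g - C_expect J \<beta> \<rho> N ?g) \<in> O(\<lambda>N. 1 / sqrt (real N))"
    if beta: "\<beta> < 1 / (\<rho>*J)" for \<beta>
  proof -
    obtain C0 N0 where C0: "\<forall>N\<ge>N0.
     set_integrable lborel {-\<rho>*J/2<..<0} (\<lambda>x. exp (-\<beta>*x*real N) * Z_MC J x \<rho> N) \<and>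
     set_integrable lborel {-\<rho>*J/2<..<0} (\<lambda>x. exp (-\<beta>*x*real N) * Z_MC J x \<rho> N * sqrt (-2*x/J)) \<and>
     0 < (LINT x:{-\<rho>*J/2<..<0}|lborel. exp (-\<beta>*x*real N) * Z_MC J x \<rho> N) \<and>
     (LINT x:{-\<rho>*J/2<..<0}|lborel. exp (-\<beta>*x*real N) * Z_MC J x \<rho> N * sqrt (-2*x/J))
       / (LINT x:{-\<rho>*J/2<..<0}|lborel. exp (-\<beta>*x*real N) * Z_MC J x \<rho> N) \<le> C0 / sqrt (real N)"
      using case_zero[OF J \<rho> beta] by blast
    define KC where "KC = 2 * real (card I)"
    have KC0: "KC \<ge> 0" by (simp add: KC_def)
    have bound: "\<bar>MC_expect J 0 \<rho> N ?g - C_expect J \<beta> \<rho> N ?g\<bar> \<le> KC * C0 * (1 / sqrt (real N))"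
      if N: "N \<ge> max (max 1 N0) N1" for N
    proof -
      have N0': "N \<ge> N0" and N1': "N \<ge> 1" using N by auto
      have INN: "I \<subseteq> {..<N}" using IN N by simp
      note C0N = C0[rule_format, OF N0']
      have Kb: "\<bar>MC_expect J 0 \<rho> N ?g - MC_expect J x \<rho> N ?g\<bar> \<le> KC * sqrt (-2*x/J)"
        if x: "x \<in> {-\<rho>*J/2<..<0}" for x
      proof -
        have x0: "x < 0" using x by simp
        have sf: "\<rho> + 2*x/J > 0" "-2*x/J > 0" "\<rho> + 2*x/J < \<rho>" using S_facts[OF J x] by auto
        let ?mx = "sqrt (-2*x/J)"
        have M0: "MC_expect J 0 \<rho> N ?g = MC_m_expect 0 \<rho> N ?g / 2 + MC_m_expect (-0) \<rho> N ?g / 2"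
          by (simp add: MC_expect_def)
        have "\<bar>MC_expect J 0 \<rho> N ?g - MC_expect J x \<rho> N ?g\<bar>
            \<le> real (card I) * (\<bar>0 - ?mx\<bar> + \<bar>sqrt (\<rho> - 0\<^sup>2) - sqrt (\<rho> - ?mx\<^sup>2)\<bar>)"
          unfolding M0 using G_diff[OF N1' fin Lip INN bnd, of 0 \<rho> ?mx] x0 by (simp add: MC_expect_S)
        also have "\<bar>sqrt (\<rho> - 0\<^sup>2) - sqrt (\<rho> - ?mx\<^sup>2)\<bar> \<le> ?mx"
        proof -
          have e2: "\<rho> - ?mx\<^sup>2 = \<rho> + 2*x/J" using sf by simp
          have "\<bar>sqrt \<rho> - sqrt (\<rho> + 2*x/J)\<bar> \<le> sqrt (\<rho> - (\<rho> + 2*x/J))"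
            by (rule sqrt_diff_le2) (use sf in auto)
          then show ?thesis unfolding e2 by simp
        qed
        also have "real (card I) * (\<bar>0 - ?mx\<bar> + ?mx) = KC * ?mx" using sf by (simp add: KC_def)
        finally show ?thesis by (simp add: mult_left_mono)
      qed
      have WKi: "set_integrable lborel {-\<rho>*J/2<..<0} (\<lambda>x. exp (-\<beta>*x*real N) * Z_MC J x \<rho> N * (KC * sqrt (-2*x/J)))"
        using set_integrable_mult_right[OF C0N[THEN conjunct2, THEN conjunct1], of KC]
        by (simp add: algebra_simps)
      have "\<bar>MC_expect J 0 \<rho> N ?g - C_expect J \<beta> \<rho> N ?g\<bar>
         \<le> (LINT x:{-\<rho>*J/2<..<0}|lborel. exp (-\<beta>*x*real N) * Z_MC J x \<rho> N * (KC * sqrt (-2*x/J)))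
           / (LINT x:{-\<rho>*J/2<..<0}|lborel. exp (-\<beta>*x*real N) * Z_MC J x \<rho> N)"
        by (rule per_N[OF J \<rho> N1' fin Lip INN bnd Kb _ WKi]) (use C0N in auto)
      also have "(LINT x:{-\<rho>*J/2<..<0}|lborel. exp (-\<beta>*x*real N) * Z_MC J x \<rho> N * (KC * sqrt (-2*x/J)))
          = KC * (LINT x:{-\<rho>*J/2<..<0}|lborel. exp (-\<beta>*x*real N) * Z_MC J x \<rho> N * sqrt (-2*x/J))"
        by (subst set_integral_mult_right[symmetric]) (simp add: algebra_simps)
      also have "KC * (LINT x:{-\<rho>*J/2<..<0}|lborel. exp (-\<beta>*x*real N) * Z_MC J x \<rho> N * sqrt (-2*x/J))
           / (LINT x:{-\<rho>*J/2<..<0}|lborel. exp (-\<beta>*x*real N) * Z_MC J x \<rho> N)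
          = KC * ((LINT x:{-\<rho>*J/2<..<0}|lborel. exp (-\<beta>*x*real N) * Z_MC J x \<rho> N * sqrt (-2*x/J))
           / (LINT x:{-\<rho>*J/2<..<0}|lborel. exp (-\<beta>*x*real N) * Z_MC J x \<rho> N))" by simp
      also have "\<dots> \<le> KC * (C0 / sqrt (real N))" using C0N KC0 by (intro mult_left_mono) auto
      finally show ?thesis by (simp add: comp_def)
    qed
    show ?thesis
    proof (rule bigoI[where c="KC * C0"])
      show "\<forall>\<^sub>F N in at_top. norm (MC_expect J 0 \<rho> N ?g - C_expect J \<beta> \<rho> N ?g)
               \<le> KC * C0 * norm (1 / sqrt (real N))"
        unfolding eventually_at_top_linorder
        using bound by (intro exI[of _ "max (max 1 N0) N1"]) simp
    qed
  qed
  show ?thesis using part1 part2 by blast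
qed

end
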